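(* Let $G$ be a connected $d$-regular simple graph with $d\ge 3$ which is not $K_4$, $K_5$, or $K_{3,3}$. Then \[ \mathscr{K}_e(G)>\mathscr{K}_{nb}(G). \]
   Context: Kemeny's constant of an irreducible finite Markov chain with transition matrix $P$ whose eigenvalues (with multiplicity) are $1=\rho_1,\rho_2,\dots,\rho_N$ (with $1$ simple) is $\mathscr{K}(P)=\sum_{i=2}^{N}\frac{1}{1-\rho_i}$. Arcs of $G$: for each edge $\{u,v\}$ the two ordered pairs $(u,v),(v,u)$. $\mathscr{K}_e(G)$ is Kemeny's constant of the chain on arcs where from $(u,v)$ one moves to $(v,w)$ with probability $1/\deg(v)$ for each neighbor $w$ of $v$. $\mathscr{K}_{nb}(G)$ is Kemeny's constant of the non-backtracking chain on arcs where from $(u,v)$ one moves to $(v,w)$ with probability $1/(\deg(v)-1)$ for each neighbor $w\neq u$ of $v$. *)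

theory Defs
  imports Jordan_Normal_Form.Char_Poly "HOL-Computational_Algebra.Polynomial" "HOL-Library.Product_Lexorder"
begin

text \<open>Kemeny's constant of a (complex) transition matrix P: the eigenvalues of P with
  multiplicity are the roots (with multiplicity) of its characteristic polynomial; one
  copy of the eigenvalue 1 is removed and the sum of 1/(1 - rho) over the rest is taken.\<close>
definition kemeny :: "complex mat \<Rightarrow> complex" where
  "kemeny P = sum_mset (image_mset (\<lambda>\<rho>. 1 / (1 - \<rho>)) (proots (char_poly P) - {#1#}))"

definition simple_graph :: "'a set \<Rightarrow> ('a \<Rightarrow> 'a \<Rightarrow> bool) \<Rightarrow> bool" where
  "simple_graph V E \<longleftrightarrow> finite V \<and> (\<forall>u v. E u v \<longrightarrow> u \<in> V \<and> v \<in> V)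
     \<and> (\<forall>u v. E u v \<longrightarrow> E v u) \<and> (\<forall>u. \<not> E u u)"

definition deg :: "'a set \<Rightarrow> ('a \<Rightarrow> 'a \<Rightarrow> bool) \<Rightarrow> 'a \<Rightarrow> nat" where
  "deg V E v = card {w \<in> V. E v w}"

definition regular :: "'a set \<Rightarrow> ('a \<Rightarrow> 'a \<Rightarrow> bool) \<Rightarrow> nat \<Rightarrow> bool" where
  "regular V E d \<longleftrightarrow> (\<forall>v\<in>V. deg V E v = d)"

definition connected_graph :: "'a set \<Rightarrow> ('a \<Rightarrow> 'a \<Rightarrow> bool) \<Rightarrow> bool" where
  "connected_graph V E \<longleftrightarrow> V \<noteq> {} \<and> (\<forall>u\<in>V. \<forall>v\<in>V. E\<^sup>*\<^sup>* u v)"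

definition graph_iso :: "'a set \<Rightarrow> ('a \<Rightarrow> 'a \<Rightarrow> bool) \<Rightarrow> 'b set \<Rightarrow> ('b \<Rightarrow> 'b \<Rightarrow> bool) \<Rightarrow> bool" where
  "graph_iso V E W F \<longleftrightarrow> (\<exists>f. bij_betw f V W \<and> (\<forall>u\<in>V. \<forall>v\<in>V. E u v \<longleftrightarrow> F (f u) (f v)))"

definition complete_V :: "nat \<Rightarrow> nat set" where "complete_V n = {0..<n}"
definition complete_E :: "nat \<Rightarrow> nat \<Rightarrow> nat \<Rightarrow> bool" where
  "complete_E n u v \<longleftrightarrow> u < n \<and> v < n \<and> u \<noteq> v"
definition K33_V :: "nat set" where "K33_V = {0..<6}"
definition K33_E :: "nat \<Rightarrow> nat \<Rightarrow> bool" where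
  "K33_E u v \<longleftrightarrow> u < 6 \<and> v < 6 \<and> ((u < 3) \<noteq> (v < 3))"

definition arcs :: "'a set \<Rightarrow> ('a \<Rightarrow> 'a \<Rightarrow> bool) \<Rightarrow> ('a \<times> 'a) set" where
  "arcs V E = {(u, v). u \<in> V \<and> v \<in> V \<and> E u v}"

definition arc_list :: "'a::linorder set \<Rightarrow> ('a \<Rightarrow> 'a \<Rightarrow> bool) \<Rightarrow> ('a \<times> 'a) list" where
  "arc_list V E = sorted_list_of_set (arcs V E)"

definition arc_matrix :: "'a::linorder set \<Rightarrow> ('a \<Rightarrow> 'a \<Rightarrow> bool)
    \<Rightarrow> ('a \<times> 'a \<Rightarrow> 'a \<times> 'a \<Rightarrow> real) \<Rightarrow> complex mat" where
  "arc_matrix V E p = (let as = arc_list V E; m = length as in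
     mat m m (\<lambda>(i, j). complex_of_real (p (as ! i) (as ! j))))"

definition edge_trans :: "'a set \<Rightarrow> ('a \<Rightarrow> 'a \<Rightarrow> bool) \<Rightarrow> 'a \<times> 'a \<Rightarrow> 'a \<times> 'a \<Rightarrow> real" where
  "edge_trans V E a b = (if fst b = snd a \<and> E (fst b) (snd b)
      then 1 / real (deg V E (snd a)) else 0)"

definition nb_trans :: "'a set \<Rightarrow> ('a \<Rightarrow> 'a \<Rightarrow> bool) \<Rightarrow> 'a \<times> 'a \<Rightarrow> 'a \<times> 'a \<Rightarrow> real" where
  "nb_trans V E a b = (if fst b = snd a \<and> E (fst b) (snd b) \<and> snd b \<noteq> fst a
      then 1 / (real (deg V E (snd a)) - 1) else 0)"

definition K_e :: "'a::linorder set \<Rightarrow> ('a \<Rightarrow> 'a \<Rightarrow> bool) \<Rightarrow> complex" where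
  "K_e V E = kemeny (arc_matrix V E (edge_trans V E))"

definition K_nb :: "'a::linorder set \<Rightarrow> ('a \<Rightarrow> 'a \<Rightarrow> bool) \<Rightarrow> complex" where
  "K_nb V E = kemeny (arc_matrix V E (nb_trans V E))"

end

theory Submission
  imports Defs "Jordan_Normal_Form.Schur_Decomposition"
begin

lemma poly_char_poly_det:
  fixes X :: "'a::field mat"
  assumes X: "X \<in> carrier_mat n n"
  shows "poly (char_poly X) x = det (x \<cdot>\<^sub>m 1\<^sub>m n - X)"
proof -
  have "poly (char_poly X) x = det (- (char_matrix X x))" by (rule char_poly_matrix[OF X])
  also have "- (char_matrix X x) = x \<cdot>\<^sub>m 1\<^sub>m n - X"
    by (rule eq_matI, insert X, auto simp: char_matrix_def)
  finally show ?thesis .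
qed

lemma sylvester_det:
  fixes X :: "'a::idom mat"
  assumes X: "X \<in> carrier_mat N n" and Y: "Y \<in> carrier_mat n N"
  shows "det (1\<^sub>m N - X * Y) = det (1\<^sub>m n - Y * X)"
proof -
  define M where "M = four_block_mat (1\<^sub>m N) X Y (1\<^sub>m n)"
  have XY: "X * Y \<in> carrier_mat N N" and YX: "Y * X \<in> carrier_mat n n" using X Y by auto
  have "four_block_mat (1\<^sub>m N) (0\<^sub>m N n) Y (1\<^sub>m n) * four_block_mat (1\<^sub>m N) X (0\<^sub>m n N) (1\<^sub>m n - Y * X) = M"
    unfolding M_def
    by (subst mult_four_block_mat[OF one_carrier_mat zero_carrier_mat Y one_carrier_mat one_carrier_mat X zero_carrier_mat minus_carrier_mat[OF YX]], insert X Y YX, auto simp: mult_minus_distrib_mat)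
  hence "det M = det (four_block_mat (1\<^sub>m N) (0\<^sub>m N n) Y (1\<^sub>m n)) * det (four_block_mat (1\<^sub>m N) X (0\<^sub>m n N) (1\<^sub>m n - Y * X))"
    by (metis det_mult four_block_carrier_mat one_carrier_mat zero_carrier_mat X Y YX minus_carrier_mat)
  also have "\<dots> = det (1\<^sub>m n - Y * X)"
    by (subst det_four_block_mat_upper_right_zero[of _ N _ n], insert Y, auto,
        subst det_four_block_mat_lower_left_zero[of _ N _ n], insert X YX, auto)
  finally have 1: "det M = det (1\<^sub>m n - Y * X)" .
  have "four_block_mat (1\<^sub>m N - X * Y) X (0\<^sub>m n N) (1\<^sub>m n) * four_block_mat (1\<^sub>m N) (0\<^sub>m N n) Y (1\<^sub>m n) = M"
    unfolding M_def
    by (subst mult_four_block_mat[OF minus_carrier_mat[OF XY] X zero_carrier_mat one_carrier_mat one_carrier_mat zero_carrier_mat Y one_carrier_mat], insert X Y XY, auto simp: add_mult_distrib_mat minus_add_uminus_mat)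
  hence "det M = det (four_block_mat (1\<^sub>m N - X * Y) X (0\<^sub>m n N) (1\<^sub>m n)) * det (four_block_mat (1\<^sub>m N) (0\<^sub>m N n) Y (1\<^sub>m n))"
    by (metis det_mult four_block_carrier_mat one_carrier_mat zero_carrier_mat X Y XY minus_carrier_mat)
  also have "\<dots> = det (1\<^sub>m N - X * Y)"
    by (subst det_four_block_mat_upper_right_zero[of _ N _ n], insert Y, auto,
        subst det_four_block_mat_lower_left_zero[of _ N _ n], insert X XY, auto)
  finally show ?thesis using 1 by simp
qed

lemma poly_eq_off_finite:
  fixes p q :: "complex poly"
  assumes F: "finite F" and eq: "\<And>x. x \<notin> F \<Longrightarrow> poly p x = poly q x"
  shows "p = q"
proof (rule ccontr)
  assume "p \<noteq> q"
  hence "p - q \<noteq> 0" by simp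
  hence fin: "finite {x. poly (p - q) x = 0}" by (rule poly_roots_finite)
  have "- F \<subseteq> {x. poly (p - q) x = 0}" using eq by auto
  hence "finite (- F)" using fin finite_subset by blast
  hence "finite (UNIV :: complex set)" using F by (metis Compl_partition2 finite_Un)
  thus False using infinite_UNIV_char_0 by blast
qed

lemma prod_list_map_scale:
  "(\<Prod>x\<leftarrow>xs. k * f x) = k ^ length xs * (\<Prod>x\<leftarrow>xs. f x)"
  for k :: "'a::comm_monoid_mult"
  by (induction xs) (auto simp: ac_simps)

lemma quadratic_split:
  fixes p q :: complex
  shows "\<exists>r1 r2. [:p, q, 1:] = [:-r1, 1:] * [:-r2, 1:] \<and> r1 + r2 = -q \<and> r1 * r2 = p"
proof -
  define s where "s = csqrt (q^2 - 4*p)"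
  define r1 where "r1 = (-q + s)/2"
  define r2 where "r2 = (-q - s)/2"
  have ss: "s * s = q^2 - 4*p" unfolding s_def by (metis power2_csqrt power2_eq_square)
  have a: "r1 + r2 = -q" unfolding r1_def r2_def by (simp add: field_simps)
  have b: "r1 * r2 = p" unfolding r1_def r2_def using ss by (simp add: field_simps power2_eq_square)
  have "[:-r1, 1:] * [:-r2, 1:] = [:r1*r2, -(r1+r2), 1:]" by (simp add: algebra_simps)
  also have "\<dots> = [:p, q, 1:]" by (simp add: a b)
  finally have c: "[:p, q, 1:] = [:-r1, 1:] * [:-r2, 1:]" by simp
  show ?thesis using a b c by blast
qed

definition mtr :: "'a::comm_ring_1 mat \<Rightarrow> 'a" where
  "mtr M = (\<Sum>i<dim_row M. M $$ (i,i))"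

lemma mtr_comm:
  fixes X :: "'a::comm_ring_1 mat"
  assumes X: "X \<in> carrier_mat n m" and Y: "Y \<in> carrier_mat m n"
  shows "mtr (X * Y) = mtr (Y * X)"
proof -
  have "mtr (X * Y) = (\<Sum>i<n. \<Sum>j<m. X $$ (i,j) * Y $$ (j,i))"
    using X Y by (auto simp: mtr_def scalar_prod_def lessThan_atLeast0 intro!: sum.cong)
  also have "\<dots> = (\<Sum>j<m. \<Sum>i<n. Y $$ (j,i) * X $$ (i,j))"
    by (subst sum.swap) (simp add: mult.commute)
  also have "\<dots> = mtr (Y * X)"
    using X Y by (auto simp: mtr_def scalar_prod_def lessThan_atLeast0 intro!: sum.cong)
  finally show ?thesis .
qed

lemma upper_tri_mult:
  fixes A B :: "'a::comm_ring_1 mat"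
  assumes A: "A \<in> carrier_mat n n" and B: "B \<in> carrier_mat n n"
    and uA: "upper_triangular A" and uB: "upper_triangular B"
  shows "upper_triangular (A * B)" "\<And>i. i < n \<Longrightarrow> (A * B) $$ (i,i) = A $$ (i,i) * B $$ (i,i)"
proof -
  show "upper_triangular (A * B)"
  proof
    fix i j assume ji: "j < i" and i: "i < dim_row (A * B)"
    have "(A * B) $$ (i,j) = (\<Sum>k\<in>{0..<n}. A $$ (i,k) * B $$ (k,j))"
      using A B i ji by (auto simp: scalar_prod_def)
    also have "\<dots> = 0"
    proof (rule sum.neutral, intro ballI)
      fix k assume k: "k \<in> {0..<n}"
      show "A $$ (i,k) * B $$ (k,j) = 0"
      proof (cases "k < i")
        case True thus ?thesis using upper_triangularD[OF uA True] A i by auto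
      next
        case False hence "j < k" using ji by auto
        thus ?thesis using upper_triangularD[OF uB \<open>j < k\<close>] B k by auto
      qed
    qed
    finally show "(A * B) $$ (i,j) = 0" .
  qed
  fix i assume i: "i < n"
  have "(A * B) $$ (i,i) = (\<Sum>k\<in>{0..<n}. A $$ (i,k) * B $$ (k,i))"
    using A B i by (auto simp: scalar_prod_def)
  also have "\<dots> = A $$ (i,i) * B $$ (i,i)"
  proof -
    have "(\<Sum>k\<in>{0..<n}. A $$ (i,k) * B $$ (k,i)) = A $$ (i,i) * B $$ (i,i) + (\<Sum>k\<in>{0..<n}-{i}. A $$ (i,k) * B $$ (k,i))"
      using i by (subst sum.remove[of _ i]) auto
    also have "(\<Sum>k\<in>{0..<n}-{i}. A $$ (i,k) * B $$ (k,i)) = 0"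
    proof (rule sum.neutral, intro ballI)
      fix k assume k: "k \<in> {0..<n}-{i}"
      show "A $$ (i,k) * B $$ (k,i) = 0"
      proof (cases "k < i")
        case True thus ?thesis using upper_triangularD[OF uA True] A i by auto
      next
        case False hence "i < k" using k by auto
        thus ?thesis using upper_triangularD[OF uB \<open>i < k\<close>] B k by auto
      qed
    qed
    finally show ?thesis by simp
  qed
  finally show "(A * B) $$ (i,i) = A $$ (i,i) * B $$ (i,i)" .
qed

lemma cmod_diff_sq:
  fixes a b :: complex and s :: real
  shows "(cmod (a - of_real s * b))^2 = (cmod a)^2 + s^2 * (cmod b)^2 - 2 * s * Re (cnj a * b)"
  by (simp only: cmod_power2) (simp add: power2_eq_square algebra_simps)

lemma cnj_mult_self: "cnj z * z = complex_of_real ((cmod z)^2)"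
  by (subst complex_norm_square) (simp add: mult.commute)

lemma sym_eigen:
  fixes w :: "nat \<Rightarrow> nat \<Rightarrow> real" and f :: "nat \<Rightarrow> complex" and \<mu> :: complex
  assumes sym: "\<And>i j. w i j = w j i"
    and ev: "\<And>i. i < n \<Longrightarrow> (\<Sum>j<n. of_real (w i j) * f j) = \<mu> * f i"
  shows "Im \<mu> * (\<Sum>i<n. (cmod (f i))^2) = 0"
    and "s^2 = 1 \<Longrightarrow> (\<Sum>i<n. \<Sum>j<n. w i j * (cmod (f i - of_real s * f j))^2)
           = 2 * (\<Sum>i<n. (\<Sum>j<n. w i j) * (cmod (f i))^2) - 2 * s * Re \<mu> * (\<Sum>i<n. (cmod (f i))^2)"
proof -
  define nf where "nf = (\<Sum>i<n. (cmod (f i))^2)"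
  have key: "(\<Sum>i<n. \<Sum>j<n. of_real (w i j) * (cnj (f i) * f j)) = \<mu> * of_real nf"
  proof -
    have "(\<Sum>i<n. \<Sum>j<n. of_real (w i j) * (cnj (f i) * f j)) = (\<Sum>i<n. cnj (f i) * (\<Sum>j<n. of_real (w i j) * f j))"
      by (simp add: sum_distrib_left algebra_simps)
    also have "\<dots> = (\<Sum>i<n. \<mu> * (cnj (f i) * f i))"
      by (rule sum.cong, simp, subst ev, auto simp: algebra_simps)
    also have "\<dots> = \<mu> * of_real nf"
      unfolding nf_def of_real_sum sum_distrib_left by (simp only: cnj_mult_self)
    finally show ?thesis .
  qed
  have ImT: "(\<Sum>i<n. \<Sum>j<n. w i j * Im (cnj (f i) * f j)) = 0"
  proof -
    define T where "T = (\<Sum>i<n. \<Sum>j<n. w i j * Im (cnj (f i) * f j))"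
    have "T = (\<Sum>i<n. \<Sum>j<n. w j i * Im (cnj (f j) * f i))"
      unfolding T_def by (rule sum.swap)
    also have "\<dots> = - T"
      unfolding T_def by (simp add: sum_negf[symmetric] sym algebra_simps)
    finally show ?thesis unfolding T_def by simp
  qed
  have "Im (\<mu> * of_real nf) = 0"
    unfolding key[symmetric] using ImT by (simp add: Im_sum)
  thus "Im \<mu> * nf = 0" by simp
  have ReT: "(\<Sum>i<n. \<Sum>j<n. w i j * Re (cnj (f i) * f j)) = Re \<mu> * nf"
  proof -
    have "Re (\<mu> * of_real nf) = Re \<mu> * nf" by simp
    thus ?thesis unfolding key[symmetric] by (simp add: Re_sum)
  qed
  assume s: "s^2 = 1"
  have "(\<Sum>i<n. \<Sum>j<n. w i j * (cmod (f i - of_real s * f j))^2)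
      = (\<Sum>i<n. \<Sum>j<n. w i j * (cmod (f i))^2) + (\<Sum>i<n. \<Sum>j<n. w i j * (cmod (f j))^2)
        - 2 * s * (\<Sum>i<n. \<Sum>j<n. w i j * Re (cnj (f i) * f j))"
    by (simp add: cmod_diff_sq s sum_subtractf sum.distrib sum_distrib_left algebra_simps)
  also have "(\<Sum>i<n. \<Sum>j<n. w i j * (cmod (f j))^2) = (\<Sum>i<n. \<Sum>j<n. w i j * (cmod (f i))^2)"
    by (subst sum.swap) (simp add: sym)
  also have "(\<Sum>i<n. \<Sum>j<n. w i j * (cmod (f i))^2) = (\<Sum>i<n. (\<Sum>j<n. w i j) * (cmod (f i))^2)"
    by (simp add: sum_distrib_right)
  finally show "(\<Sum>i<n. \<Sum>j<n. w i j * (cmod (f i - of_real s * f j))^2)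
           = 2 * (\<Sum>i<n. (\<Sum>j<n. w i j) * (cmod (f i))^2) - 2 * s * Re \<mu> * nf"
    using ReT by simp
qed

locale rg =
  fixes V :: "'a::linorder set" and E :: "'a \<Rightarrow> 'a \<Rightarrow> bool" and d :: nat
  assumes sg: "simple_graph V E" and conn: "connected_graph V E" and reg: "regular V E d" and d3: "d \<ge> 3"
begin

definition "vs = sorted_list_of_set V"
definition "nV = card V"
definition "as = arc_list V E"
definition "nA = length as"

lemma finV: "finite V" using sg unfolding simple_graph_def by auto
lemma EV: "E u v \<Longrightarrow> u \<in> V \<and> v \<in> V" using sg unfolding simple_graph_def by auto
lemma Esym: "E u v \<Longrightarrow> E v u" using sg unfolding simple_graph_def by auto
lemma Eirr: "\<not> E u u" using sg unfolding simple_graph_def by auto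
lemma Vne: "V \<noteq> {}" using conn unfolding connected_graph_def by auto
lemma degd: "v \<in> V \<Longrightarrow> card {w\<in>V. E v w} = d" using reg unfolding regular_def deg_def by auto
lemma deg_d: "v \<in> V \<Longrightarrow> deg V E v = d" using reg unfolding regular_def by auto

lemma vs: "distinct vs" "set vs = V" "length vs = nV"
  using finV unfolding vs_def nV_def by auto

lemma arcs_fin: "finite (arcs V E)"
proof -
  have "arcs V E \<subseteq> V \<times> V" unfolding arcs_def by auto
  thus ?thesis using finV finite_subset by blast
qed

lemma as: "distinct as" "set as = arcs V E" "length as = nA"
  using arcs_fin unfolding as_def arc_list_def nA_def by auto

lemma arcs_iff: "p \<in> arcs V E \<longleftrightarrow> E (fst p) (snd p)"
  unfolding arcs_def using EV by (cases p) auto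

lemma sum_V: "(\<Sum>k=0..<nV. g (vs ! k)) = (\<Sum>x\<in>V. g x)"
proof -
  have "bij_betw ((!) vs) {0..<nV} V" using vs by (intro bij_betw_nth) auto
  thus ?thesis by (rule sum.reindex_bij_betw)
qed

lemma sum_A: "(\<Sum>k=0..<nA. g (as ! k)) = (\<Sum>x\<in>arcs V E. g x)"
proof -
  have "bij_betw ((!) as) {0..<nA} (arcs V E)" using as by (intro bij_betw_nth) auto
  thus ?thesis by (rule sum.reindex_bij_betw)
qed

lemma vs_in: "i < nV \<Longrightarrow> vs ! i \<in> V" using vs by (metis nth_mem)
lemma vs_inj: "i < nV \<Longrightarrow> j < nV \<Longrightarrow> vs ! i = vs ! j \<longleftrightarrow> i = j"
  using vs by (simp add: nth_eq_iff_index_eq)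
lemma as_in: "i < nA \<Longrightarrow> E (fst (as ! i)) (snd (as ! i))"
  using as arcs_iff by (metis nth_mem)
lemma as_inj: "i < nA \<Longrightarrow> j < nA \<Longrightarrow> as ! i = as ! j \<longleftrightarrow> i = j"
  using as by (simp add: nth_eq_iff_index_eq)

lemma card_arcs: "card (arcs V E) = nV * d"
proof -
  have "arcs V E = Sigma V (\<lambda>u. {w\<in>V. E u w})" unfolding arcs_def by auto
  hence "card (arcs V E) = (\<Sum>u\<in>V. card {w\<in>V. E u w})"
    using finV by (simp add: card_SigmaI)
  also have "\<dots> = (\<Sum>u\<in>V. d)" using degd by simp
  finally show ?thesis unfolding nV_def by simp
qed

lemma nA_eq: "nA = nV * d" using as card_arcs by (metis distinct_card)

definition "mE = card {p\<in>arcs V E. fst p < snd p}"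

lemma nA_even: "nA = 2 * mE"
proof -
  let ?F = "{p\<in>arcs V E. fst p < snd p}"
  have U: "arcs V E = ?F \<union> prod.swap ` ?F"
  proof (intro equalityI subsetI)
    fix p assume p: "p \<in> arcs V E"
    hence "fst p \<noteq> snd p" using arcs_iff Eirr by metis
    hence "fst p < snd p \<or> snd p < fst p" by auto
    thus "p \<in> ?F \<union> prod.swap ` ?F"
    proof
      assume "snd p < fst p"
      hence "prod.swap p \<in> ?F" using p arcs_iff Esym by auto
      hence "prod.swap (prod.swap p) \<in> prod.swap ` ?F" by blast
      thus ?thesis by simp
    qed (use p in auto)
  next
    fix p assume "p \<in> ?F \<union> prod.swap ` ?F"
    thus "p \<in> arcs V E" using arcs_iff Esym by fastforce
  qed
  have D: "?F \<inter> prod.swap ` ?F = {}" by auto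
  have C: "card (prod.swap ` ?F) = card ?F" by (rule card_image) (simp add: inj_on_def)
  have fF: "finite ?F" using arcs_fin by auto
  have "card (arcs V E) = card (?F \<union> prod.swap ` ?F)" using U by (rule arg_cong)
  also have "\<dots> = card ?F + card (prod.swap ` ?F)" using D fF by (intro card_Un_disjoint) auto
  finally have "card (arcs V E) = 2 * card ?F" using C by simp
  thus ?thesis unfolding mE_def using as by (metis distinct_card)
qed

lemma nV_ge: "nV \<ge> d + 1"
proof -
  obtain v where v: "v \<in> V" using Vne by auto
  have "{w\<in>V. E v w} \<subseteq> V - {v}" using Eirr by auto
  hence "card {w\<in>V. E v w} \<le> card (V - {v})" using finV by (intro card_mono) auto
  moreover have "card (V - {v}) = card V - 1" using v finV by simp
  moreover have "card V \<ge> 1" using v finV by (metis One_nat_def Suc_leI card_gt_0_iff empty_iff)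
  ultimately show ?thesis using degd[OF v] unfolding nV_def by linarith
qed

lemma mE_ge: "mE \<ge> nV"
proof -
  have "2 * mE = nV * d" using nA_even nA_eq by simp
  moreover have "nV * d \<ge> nV * 3" using d3 by simp
  ultimately show ?thesis by linarith
qed

end

context rg begin

definition "Am = mat nV nV (\<lambda>(i,j). if E (vs!i) (vs!j) then 1 else 0 :: complex)"
definition "Sm = mat nA nV (\<lambda>(a,i). if fst (as!a) = vs!i then 1 else 0 :: complex)"
definition "Tm = mat nA nV (\<lambda>(a,i). if snd (as!a) = vs!i then 1 else 0 :: complex)"
definition "Jm = mat nA nA (\<lambda>(a,b). if as!b = prod.swap (as!a) then 1 else 0 :: complex)"
definition "sgn_a a = (if fst (as!a) < snd (as!a) then 1 else -1 :: complex)"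
definition "Dm = mat nA nA (\<lambda>(a,b). if a = b then sgn_a a else 0)"

lemma carriers[simp]: "Am \<in> carrier_mat nV nV" "Sm \<in> carrier_mat nA nV" "Tm \<in> carrier_mat nA nV"
  "Jm \<in> carrier_mat nA nA" "Dm \<in> carrier_mat nA nA"
  by (auto simp: Am_def Sm_def Tm_def Jm_def Dm_def)

lemma delta_V:
  assumes "y \<in> V"
  shows "(\<Sum>x\<in>V. (if y = x then 1 else 0) * (if z = x then 1 else 0 :: complex)) = (if z = y then 1 else 0)"
proof -
  have "(\<Sum>x\<in>V. (if y = x then 1 else 0) * (if z = x then 1 else 0 :: complex)) = (\<Sum>x\<in>V. if x = y then (if z = y then 1 else 0) else 0)"
    by (rule sum.cong) auto
  also have "\<dots> = (if z = y then 1 else 0)" using assms finV by simp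
  finally show ?thesis .
qed

lemma delta_arcs:
  assumes "q \<in> arcs V E"
  shows "(\<Sum>p\<in>arcs V E. (if p = q then 1 else 0) * f p) = (f q :: complex)"
proof -
  have "(\<Sum>p\<in>arcs V E. (if p = q then 1 else 0) * f p) = (\<Sum>p\<in>arcs V E. if p = q then f q else 0)"
    by (rule sum.cong) auto
  also have "\<dots> = f q" using assms arcs_fin by simp
  finally show ?thesis .
qed

lemma TS: "Tm * transpose_mat Sm = mat nA nA (\<lambda>(a,b). if snd (as!a) = fst (as!b) then 1 else 0)"
proof (rule eq_matI)
  fix a b assume a: "a < dim_row (mat nA nA (\<lambda>(a,b). if snd (as!a) = fst (as!b) then 1 else 0 :: complex))"
    and b: "b < dim_col (mat nA nA (\<lambda>(a,b). if snd (as!a) = fst (as!b) then 1 else 0 :: complex))"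
  have "(Tm * transpose_mat Sm) $$ (a,b) = (\<Sum>k=0..<nV. (if snd (as!a) = vs!k then 1 else 0) * (if fst (as!b) = vs!k then 1 else 0))"
    using a b by (simp add: Tm_def Sm_def scalar_prod_def)
  also have "\<dots> = (\<Sum>x\<in>V. (if snd (as!a) = x then 1 else 0) * (if fst (as!b) = x then 1 else 0))"
    by (rule sum_V)
  also have "\<dots> = (if fst (as!b) = snd (as!a) then 1 else 0)"
    using a as_in EV by (intro delta_V) auto
  finally show "(Tm * transpose_mat Sm) $$ (a,b) = mat nA nA (\<lambda>(a,b). if snd (as!a) = fst (as!b) then 1 else 0 :: complex) $$ (a,b)"
    using a b by auto
qed (auto simp: Tm_def Sm_def)

lemma ST: "transpose_mat Sm * Tm = Am"
proof (rule eq_matI)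
  fix i j assume i: "i < dim_row Am" and j: "j < dim_col Am"
  have "(transpose_mat Sm * Tm) $$ (i,j) = (\<Sum>k=0..<nA. (if fst (as!k) = vs!i then 1 else 0) * (if snd (as!k) = vs!j then 1 else 0))"
    using i j by (simp add: Tm_def Sm_def Am_def scalar_prod_def)
  also have "\<dots> = (\<Sum>p\<in>arcs V E. (if fst p = vs!i then 1 else 0) * (if snd p = vs!j then 1 else 0))"
    by (rule sum_A)
  also have "\<dots> = (\<Sum>p\<in>arcs V E. if p = (vs!i, vs!j) then 1 else 0)"
    by (rule sum.cong) (auto simp: prod_eq_iff)
  also have "\<dots> = (if E (vs!i) (vs!j) then 1 else 0)"
    using arcs_fin arcs_iff[of "(vs!i, vs!j)"] by simp
  finally show "(transpose_mat Sm * Tm) $$ (i,j) = Am $$ (i,j)" using i j by (simp add: Am_def)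
qed (auto simp: Am_def Sm_def Tm_def)

lemma SJ: "transpose_mat Sm * Jm = transpose_mat Tm"
proof (rule eq_matI)
  fix i b assume i: "i < dim_row (transpose_mat Tm)" and b: "b < dim_col (transpose_mat Tm)"
  hence i': "i < nV" and b': "b < nA" by (auto simp: Tm_def)
  have sw: "prod.swap (as!b) \<in> arcs V E" using as_in[OF b'] Esym arcs_iff by auto
  have "(transpose_mat Sm * Jm) $$ (i,b) = (\<Sum>k=0..<nA. (if fst (as!k) = vs!i then 1 else 0) * (if as!b = prod.swap (as!k) then 1 else 0))"
    using i' b' by (simp add: Jm_def Sm_def scalar_prod_def)
  also have "\<dots> = (\<Sum>p\<in>arcs V E. (if fst p = vs!i then 1 else 0) * (if as!b = prod.swap p then 1 else 0))"
    by (rule sum_A)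
  also have "\<dots> = (\<Sum>p\<in>arcs V E. (if p = prod.swap (as!b) then 1 else 0) * (if fst p = vs!i then 1 else 0))"
    by (rule sum.cong) auto
  also have "\<dots> = (if fst (prod.swap (as!b)) = vs!i then 1 else 0)"
    by (rule delta_arcs[OF sw])
  finally show "(transpose_mat Sm * Jm) $$ (i,b) = transpose_mat Tm $$ (i,b)" using i' b' by (simp add: Tm_def)
qed (auto simp: Jm_def Sm_def Tm_def)

lemma in_card: "v \<in> V \<Longrightarrow> card {p\<in>arcs V E. snd p = v} = d"
proof -
  assume v: "v \<in> V"
  have "{p\<in>arcs V E. snd p = v} = (\<lambda>u. (u,v)) ` {u\<in>V. E v u}"
    using arcs_iff EV Esym by auto
  also have "card \<dots> = card {u\<in>V. E v u}" by (rule card_image) (simp add: inj_on_def)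
  finally show ?thesis using degd[OF v] by simp
qed

lemma TT: "transpose_mat Tm * Tm = of_nat d \<cdot>\<^sub>m 1\<^sub>m nV"
proof (rule eq_matI)
  fix i j assume i: "i < dim_row (of_nat d \<cdot>\<^sub>m 1\<^sub>m nV :: complex mat)" and j: "j < dim_col (of_nat d \<cdot>\<^sub>m 1\<^sub>m nV :: complex mat)"
  hence i': "i < nV" and j': "j < nV" by auto
  have "(transpose_mat Tm * Tm) $$ (i,j) = (\<Sum>k=0..<nA. (if snd (as!k) = vs!i then 1 else 0) * (if snd (as!k) = vs!j then 1 else 0))"
    using i' j' by (simp add: Tm_def scalar_prod_def)
  also have "\<dots> = (\<Sum>p\<in>arcs V E. (if snd p = vs!i then 1 else 0) * (if snd p = vs!j then 1 else 0))"
    by (rule sum_A)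
  also have "\<dots> = (\<Sum>p\<in>arcs V E. if i = j \<and> snd p = vs!i then 1 else 0)"
    by (rule sum.cong) (use vs_inj i' j' in auto)
  also have "\<dots> = (if i = j then of_nat d else 0)"
  proof (cases "i = j")
    case True
    have "(\<Sum>p\<in>arcs V E. if i = j \<and> snd p = vs!i then 1 else 0 :: complex) = of_nat (card {p\<in>arcs V E. snd p = vs!i})"
      using True arcs_fin by (simp add: sum.If_cases Int_def)
    also have "\<dots> = of_nat d" using in_card vs_in i' by simp
    finally show ?thesis using True by simp
  qed simp
  finally show "(transpose_mat Tm * Tm) $$ (i,j) = (of_nat d \<cdot>\<^sub>m 1\<^sub>m nV) $$ (i,j)" using i' j' by simp
qed (auto simp: Tm_def)

lemma JJ: "Jm * Jm = 1\<^sub>m nA"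
proof (rule eq_matI)
  fix a c assume a: "a < dim_row (1\<^sub>m nA :: complex mat)" and c: "c < dim_col (1\<^sub>m nA :: complex mat)"
  hence a': "a < nA" and c': "c < nA" by auto
  have sw: "prod.swap (as!a) \<in> arcs V E" using as_in[OF a'] Esym arcs_iff by auto
  have "(Jm * Jm) $$ (a,c) = (\<Sum>k=0..<nA. (if as!k = prod.swap (as!a) then 1 else 0) * (if as!c = prod.swap (as!k) then 1 else 0))"
    using a' c' by (simp add: Jm_def scalar_prod_def)
  also have "\<dots> = (\<Sum>p\<in>arcs V E. (if p = prod.swap (as!a) then 1 else 0) * (if as!c = prod.swap p then 1 else 0))"
    by (rule sum_A)
  also have "\<dots> = (if as!c = prod.swap (prod.swap (as!a)) then 1 else 0)"
    by (rule delta_arcs[OF sw])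
  also have "\<dots> = (if c = a then 1 else 0)" using as_inj a' c' by simp
  finally show "(Jm * Jm) $$ (a,c) = 1\<^sub>m nA $$ (a,c)" using a' c' by auto
qed (auto simp: Jm_def)

lemma D_left: "X \<in> carrier_mat nA k \<Longrightarrow> a < nA \<Longrightarrow> b < k \<Longrightarrow> (Dm * X) $$ (a,b) = sgn_a a * X $$ (a,b)"
proof -
  assume X: "X \<in> carrier_mat nA k" and a: "a < nA" and b: "b < k"
  have "(Dm * X) $$ (a,b) = (\<Sum>j=0..<nA. (if a = j then sgn_a a else 0) * X $$ (j,b))"
    using X a b by (simp add: Dm_def scalar_prod_def)
  also have "\<dots> = (\<Sum>j=0..<nA. if j = a then sgn_a a * X $$ (a,b) else 0)"
    by (rule sum.cong) auto
  also have "\<dots> = sgn_a a * X $$ (a,b)" using a by simp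
  finally show ?thesis .
qed

lemma D_right: "X \<in> carrier_mat k nA \<Longrightarrow> a < k \<Longrightarrow> b < nA \<Longrightarrow> (X * Dm) $$ (a,b) = X $$ (a,b) * sgn_a b"
proof -
  assume X: "X \<in> carrier_mat k nA" and a: "a < k" and b: "b < nA"
  have "(X * Dm) $$ (a,b) = (\<Sum>j=0..<nA. X $$ (a,j) * (if j = b then sgn_a j else 0))"
    using X a b by (simp add: Dm_def scalar_prod_def)
  also have "\<dots> = (\<Sum>j=0..<nA. if j = b then X $$ (a,b) * sgn_a b else 0)"
    by (rule sum.cong) auto
  also have "\<dots> = X $$ (a,b) * sgn_a b" using b by simp
  finally show ?thesis .
qed

lemma sgn_sq: "a < nA \<Longrightarrow> sgn_a a * sgn_a a = 1" by (simp add: sgn_a_def)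

lemma DD: "Dm * Dm = 1\<^sub>m nA"
proof (rule eq_matI)
  fix a b assume a: "a < dim_row (1\<^sub>m nA :: complex mat)" and b: "b < dim_col (1\<^sub>m nA :: complex mat)"
  hence a': "a < nA" and b': "b < nA" by auto
  have "(Dm * Dm) $$ (a,b) = sgn_a a * Dm $$ (a,b)" by (rule D_left) (use a' b' in auto)
  thus "(Dm * Dm) $$ (a,b) = 1\<^sub>m nA $$ (a,b)" using a' b' sgn_sq by (simp add: Dm_def)
qed (auto simp: Dm_def)

lemma DJD: "Dm * Jm * Dm = - Jm"
proof (rule eq_matI)
  fix a b assume a: "a < dim_row (- Jm)" and b: "b < dim_col (- Jm)"
  hence a': "a < nA" and b': "b < nA" by (auto simp: Jm_def)
  have 1: "(Dm * Jm * Dm) $$ (a,b) = (Dm * Jm) $$ (a,b) * sgn_a b"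
    by (rule D_right) (use a' b' mult_carrier_mat[of Dm nA nA Jm nA] in auto)
  have 2: "(Dm * Jm) $$ (a,b) = sgn_a a * Jm $$ (a,b)"
    by (rule D_left) (use a' b' in auto)
  have 3: "sgn_a a * Jm $$ (a,b) * sgn_a b = - Jm $$ (a,b)"
  proof (cases "as!b = prod.swap (as!a)")
    case True
    have ne: "fst (as!a) \<noteq> snd (as!a)" using as_in[OF a'] Eirr by metis
    have "sgn_a b = - sgn_a a" unfolding sgn_a_def using True ne
      by (cases "as!a") (auto)
    note sb = this
    have j1: "Jm $$ (a,b) = 1" using True a' b' by (simp add: Jm_def)
    show ?thesis unfolding j1 sb using sgn_sq[OF a'] by simp
  next
    case False thus ?thesis using a' b' by (simp add: Jm_def)
  qed
  show "(Dm * Jm * Dm) $$ (a,b) = (- Jm) $$ (a,b)" unfolding 1 2 3 using a' b' by (simp add: Jm_def)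
qed (auto simp: Jm_def Dm_def)

end

lemma det_shift_smult:
  fixes A :: "'a::field mat"
  assumes A: "A \<in> carrier_mat n n" and c: "c \<noteq> 0"
  shows "det (x \<cdot>\<^sub>m 1\<^sub>m n - c \<cdot>\<^sub>m A) = c^n * poly (char_poly A) (x / c)"
proof -
  have "x \<cdot>\<^sub>m 1\<^sub>m n - c \<cdot>\<^sub>m A = c \<cdot>\<^sub>m ((x/c) \<cdot>\<^sub>m 1\<^sub>m n - A)"
    by (rule eq_matI) (insert A c, auto simp: field_simps)
  hence "det (x \<cdot>\<^sub>m 1\<^sub>m n - c \<cdot>\<^sub>m A) = c^n * det ((x/c) \<cdot>\<^sub>m 1\<^sub>m n - A)"
    using A by simp
  thus ?thesis using poly_char_poly_det[OF A] by simp
qed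

lemma sylvester_scaled:
  fixes X :: "'a::field mat"
  assumes X: "X \<in> carrier_mat N n" and Y: "Y \<in> carrier_mat n N" and z: "z \<noteq> 0" and nN: "n \<le> N"
  shows "det (z \<cdot>\<^sub>m 1\<^sub>m N - X * Y) = z^(N-n) * det (z \<cdot>\<^sub>m 1\<^sub>m n - Y * X)"
proof -
  have e1: "((1/z) \<cdot>\<^sub>m X) * Y = (1/z) \<cdot>\<^sub>m (X * Y)" using X Y by (rule mult_smult_assoc_mat)
  have "z \<cdot>\<^sub>m 1\<^sub>m N - X * Y = z \<cdot>\<^sub>m (1\<^sub>m N - ((1/z) \<cdot>\<^sub>m X) * Y)"
    unfolding e1 by (rule eq_matI) (insert X Y z, auto simp: field_simps)
  hence "det (z \<cdot>\<^sub>m 1\<^sub>m N - X * Y) = z^N * det (1\<^sub>m N - ((1/z) \<cdot>\<^sub>m X) * Y)"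
    using X Y by simp
  also have "det (1\<^sub>m N - ((1/z) \<cdot>\<^sub>m X) * Y) = det (1\<^sub>m n - Y * ((1/z) \<cdot>\<^sub>m X))"
    by (rule sylvester_det) (use X Y in auto)
  also have "Y * ((1/z) \<cdot>\<^sub>m X) = (1/z) \<cdot>\<^sub>m (Y * X)" using Y X by (rule mult_smult_distrib)
  also have "1\<^sub>m n - (1/z) \<cdot>\<^sub>m (Y * X) = (1/z) \<cdot>\<^sub>m (z \<cdot>\<^sub>m 1\<^sub>m n - Y * X)"
    by (rule eq_matI) (insert X Y z, auto simp: field_simps)
  also have "det \<dots> = (1/z)^n * det (z \<cdot>\<^sub>m 1\<^sub>m n - Y * X)" using X Y by simp
  finally have "det (z \<cdot>\<^sub>m 1\<^sub>m N - X * Y) = z^N * (1/z)^n * det (z \<cdot>\<^sub>m 1\<^sub>m n - Y * X)" by simp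
  also have "z^N * (1/z)^n = z^(N-n)"
    using z nN by (simp add: power_diff power_one_over field_simps)
  finally show ?thesis .
qed

context rg begin

lemma arc_matrix_eq: "arc_matrix V E p = mat nA nA (\<lambda>(i,j). complex_of_real (p (as!i) (as!j)))"
  by (simp add: arc_matrix_def as_def nA_def Let_def)

lemma dims[simp]: "dim_row Am = nV" "dim_col Am = nV" "dim_row Sm = nA" "dim_col Sm = nV"
  "dim_row Tm = nA" "dim_col Tm = nV" "dim_row Jm = nA" "dim_col Jm = nA" "dim_row Dm = nA" "dim_col Dm = nA"
  by (auto simp: Am_def Sm_def Tm_def Jm_def Dm_def)

definition "Bm = Tm * transpose_mat Sm - Jm"

lemma Bm_carrier[simp]: "Bm \<in> carrier_mat nA nA" unfolding Bm_def by (rule minus_carrier_mat) simp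

lemma Bm_dims[simp]: "dim_row Bm = nA" "dim_col Bm = nA" by (metis Bm_carrier carrier_matD)+

lemma snd_in: "a < nA \<Longrightarrow> snd (as!a) \<in> V" using as_in EV by blast

lemma Pe_eq: "arc_matrix V E (edge_trans V E) = (1 / of_nat d) \<cdot>\<^sub>m (Tm * transpose_mat Sm)"
proof (rule eq_matI)
  fix a b assume a: "a < dim_row ((1 / of_nat d) \<cdot>\<^sub>m (Tm * transpose_mat Sm))"
    and b: "b < dim_col ((1 / of_nat d) \<cdot>\<^sub>m (Tm * transpose_mat Sm))"
  hence a': "a < nA" and b': "b < nA" by auto
  have Eb: "E (fst (as!b)) (snd (as!b))" by (rule as_in[OF b'])
  have dg: "deg V E (snd (as!a)) = d" using snd_in[OF a'] deg_d by blast
  show "arc_matrix V E (edge_trans V E) $$ (a,b) = ((1 / of_nat d) \<cdot>\<^sub>m (Tm * transpose_mat Sm)) $$ (a,b)"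
    unfolding arc_matrix_eq TS using a' b' Eb dg
    by (cases "snd (as!a) = fst (as!b)") (auto simp: edge_trans_def)
qed (auto simp: arc_matrix_eq)

lemma Pnb_eq: "arc_matrix V E (nb_trans V E) = (1 / (of_nat d - 1)) \<cdot>\<^sub>m Bm"
proof (rule eq_matI)
  fix a b assume a: "a < dim_row ((1 / (of_nat d - 1)) \<cdot>\<^sub>m Bm)"
    and b: "b < dim_col ((1 / (of_nat d - 1)) \<cdot>\<^sub>m Bm)"
  hence a': "a < nA" and b': "b < nA" by auto
  have Eb: "E (fst (as!b)) (snd (as!b))" by (rule as_in[OF b'])
  have dg: "deg V E (snd (as!a)) = d" using snd_in[OF a'] deg_d by blast
  have Bab: "Bm $$ (a,b) = (if snd (as!a) = fst (as!b) then 1 else 0) - (if as!b = prod.swap (as!a) then 1 else 0)"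
    unfolding Bm_def using a' b' by (simp add: TS Jm_def)
  have sw: "as!b = prod.swap (as!a) \<longleftrightarrow> snd (as!a) = fst (as!b) \<and> snd (as!b) = fst (as!a)"
    by (cases "as!a"; cases "as!b") auto
  show "arc_matrix V E (nb_trans V E) $$ (a,b) = ((1 / (of_nat d - 1)) \<cdot>\<^sub>m Bm) $$ (a,b)"
    unfolding arc_matrix_eq using a' b' Eb dg
    by (cases "snd (as!a) = fst (as!b)"; cases "snd (as!b) = fst (as!a)") (auto simp: nb_trans_def Bab sw)
qed (auto simp: arc_matrix_eq)

lemma nV_le_nA: "nV \<le> nA" using nA_eq d3 by simp

lemma cpPe:
  assumes es: "char_poly Am = (\<Prod>a\<leftarrow>es. [:-a, 1:])" and les: "length es = nV"
  shows "char_poly (arc_matrix V E (edge_trans V E)) = [:0,1:]^(nA - nV) * (\<Prod>a\<leftarrow>es. [:-(a / of_nat d), 1:])"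
proof (rule poly_eq_off_finite[of "{0}"])
  fix x :: complex assume x: "x \<notin> {0}"
  have d0: "(of_nat d :: complex) \<noteq> 0" using d3 by simp
  have Pc: "arc_matrix V E (edge_trans V E) \<in> carrier_mat nA nA" by (simp add: arc_matrix_eq)
  have "poly (char_poly (arc_matrix V E (edge_trans V E))) x = det (x \<cdot>\<^sub>m 1\<^sub>m nA - arc_matrix V E (edge_trans V E))"
    by (rule poly_char_poly_det[OF Pc])
  have P2: "arc_matrix V E (edge_trans V E) = ((1 / of_nat d) \<cdot>\<^sub>m Tm) * transpose_mat Sm"
    unfolding Pe_eq by (rule mult_smult_assoc_mat[symmetric]) auto
  have "det (x \<cdot>\<^sub>m 1\<^sub>m nA - ((1 / of_nat d) \<cdot>\<^sub>m Tm) * transpose_mat Sm)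
      = x^(nA - nV) * det (x \<cdot>\<^sub>m 1\<^sub>m nV - transpose_mat Sm * ((1 / of_nat d) \<cdot>\<^sub>m Tm))"
    by (rule sylvester_scaled) (use x nV_le_nA in auto)
  also have "transpose_mat Sm * ((1 / of_nat d) \<cdot>\<^sub>m Tm) = (1 / of_nat d) \<cdot>\<^sub>m Am"
    unfolding ST[symmetric] by (rule mult_smult_distrib) auto
  also have "det (x \<cdot>\<^sub>m 1\<^sub>m nV - (1 / of_nat d) \<cdot>\<^sub>m Am) = (1 / of_nat d)^nV * poly (char_poly Am) (x / (1 / of_nat d))"
    by (rule det_shift_smult) (use d0 in auto)
  also have "poly (char_poly Am) (x / (1 / of_nat d)) = (\<Prod>a\<leftarrow>es. of_nat d * (x - a / of_nat d))"
    unfolding es poly_prod_list map_map o_def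
    by (intro arg_cong[where f = prod_list] map_cong refl) (use d0 in \<open>simp add: field_simps\<close>)
  also have "\<dots> = of_nat d ^ nV * (\<Prod>a\<leftarrow>es. (x - a / of_nat d))"
    by (simp add: prod_list_map_scale les)
  finally have "det (x \<cdot>\<^sub>m 1\<^sub>m nA - ((1 / of_nat d) \<cdot>\<^sub>m Tm) * transpose_mat Sm) = x^(nA - nV) * (\<Prod>a\<leftarrow>es. (x - a / of_nat d))"
    using d0 by (simp add: power_one_over)
  thus "poly (char_poly (arc_matrix V E (edge_trans V E))) x = poly ([:0,1:]^(nA - nV) * (\<Prod>a\<leftarrow>es. [:-(a / of_nat d), 1:])) x"
    using poly_char_poly_det[OF Pc, of x] P2 by (simp add: poly_prod_list o_def)
qed simp

end

context rg begin

lemma DMD: "M \<in> carrier_mat nA nA \<Longrightarrow> a < nA \<Longrightarrow> b < nA \<Longrightarrow> (Dm * M * Dm) $$ (a,b) = sgn_a a * M $$ (a,b) * sgn_a b"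
proof -
  assume M: "M \<in> carrier_mat nA nA" and a: "a < nA" and b: "b < nA"
  have "(Dm * M * Dm) $$ (a,b) = (Dm * M) $$ (a,b) * sgn_a b"
    by (rule D_right) (use a b M mult_carrier_mat[of Dm nA nA M nA] in auto)
  also have "(Dm * M) $$ (a,b) = sgn_a a * M $$ (a,b)"
    by (rule D_left) (use a b M in auto)
  finally show ?thesis .
qed

lemma sJs: "a < nA \<Longrightarrow> b < nA \<Longrightarrow> sgn_a a * Jm $$ (a,b) * sgn_a b = - Jm $$ (a,b)"
  using DJD DMD[of Jm a b] by (metis carriers(4) index_uminus_mat(1) dims(7,8))

lemma det_Dm_sq: "det Dm * det Dm = 1"
  using det_mult[of Dm nA Dm] DD by simp

lemma detJ_sym: "det (y \<cdot>\<^sub>m 1\<^sub>m nA + Jm) = det (y \<cdot>\<^sub>m 1\<^sub>m nA - Jm)"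
proof -
  have Mc: "y \<cdot>\<^sub>m 1\<^sub>m nA - Jm \<in> carrier_mat nA nA" by (rule minus_carrier_mat) simp
  have "Dm * (y \<cdot>\<^sub>m 1\<^sub>m nA - Jm) * Dm = y \<cdot>\<^sub>m 1\<^sub>m nA + Jm"
  proof (rule eq_matI)
    fix a b assume a: "a < dim_row (y \<cdot>\<^sub>m 1\<^sub>m nA + Jm)" and b: "b < dim_col (y \<cdot>\<^sub>m 1\<^sub>m nA + Jm)"
    hence a': "a < nA" and b': "b < nA" by auto
    have "(Dm * (y \<cdot>\<^sub>m 1\<^sub>m nA - Jm) * Dm) $$ (a,b) = sgn_a a * (y \<cdot>\<^sub>m 1\<^sub>m nA - Jm) $$ (a,b) * sgn_a b"
      by (rule DMD[OF Mc a' b'])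
    also have "\<dots> = (if a = b then y * (sgn_a a * sgn_a a) else 0) - sgn_a a * Jm $$ (a,b) * sgn_a b"
      using a' b' by (auto simp: algebra_simps)
    also have "\<dots> = (y \<cdot>\<^sub>m 1\<^sub>m nA + Jm) $$ (a,b)"
      using a' b' sJs[OF a' b'] sgn_sq[OF a'] by auto
    finally show "(Dm * (y \<cdot>\<^sub>m 1\<^sub>m nA - Jm) * Dm) $$ (a,b) = (y \<cdot>\<^sub>m 1\<^sub>m nA + Jm) $$ (a,b)" .
  qed (use Mc in auto)
  hence "det (y \<cdot>\<^sub>m 1\<^sub>m nA + Jm) = det (Dm * (y \<cdot>\<^sub>m 1\<^sub>m nA - Jm) * Dm)" by simp
  also have "\<dots> = det Dm * det (y \<cdot>\<^sub>m 1\<^sub>m nA - Jm) * det Dm"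
    using det_mult[OF mult_carrier_mat[OF carriers(5) Mc] carriers(5)] det_mult[OF carriers(5) Mc] by simp
  also have "\<dots> = det (y \<cdot>\<^sub>m 1\<^sub>m nA - Jm)" using det_Dm_sq by (simp add: algebra_simps)
  finally show ?thesis .
qed

lemma JpJm: "(y \<cdot>\<^sub>m 1\<^sub>m nA - Jm) * (y \<cdot>\<^sub>m 1\<^sub>m nA + Jm) = (y^2 - 1) \<cdot>\<^sub>m 1\<^sub>m nA"
proof -
  have c1: "y \<cdot>\<^sub>m 1\<^sub>m nA \<in> carrier_mat nA nA" by simp
  have c2: "y \<cdot>\<^sub>m 1\<^sub>m nA + Jm \<in> carrier_mat nA nA" by simp
  have "(y \<cdot>\<^sub>m 1\<^sub>m nA - Jm) * (y \<cdot>\<^sub>m 1\<^sub>m nA + Jm) = (y \<cdot>\<^sub>m 1\<^sub>m nA) * (y \<cdot>\<^sub>m 1\<^sub>m nA + Jm) - Jm * (y \<cdot>\<^sub>m 1\<^sub>m nA + Jm)"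
    by (rule minus_mult_distrib_mat[OF c1 carriers(4) c2])
  also have "(y \<cdot>\<^sub>m 1\<^sub>m nA) * (y \<cdot>\<^sub>m 1\<^sub>m nA + Jm) = y \<cdot>\<^sub>m (y \<cdot>\<^sub>m 1\<^sub>m nA + Jm)"
    by (subst mult_smult_assoc_mat[OF one_carrier_mat c2]) (use c2 in simp)
  also have "Jm * (y \<cdot>\<^sub>m 1\<^sub>m nA + Jm) = Jm * (y \<cdot>\<^sub>m 1\<^sub>m nA) + Jm * Jm"
    by (rule mult_add_distrib_mat[OF carriers(4) c1 carriers(4)])
  also have "Jm * (y \<cdot>\<^sub>m 1\<^sub>m nA) = y \<cdot>\<^sub>m Jm"
    by (subst mult_smult_distrib[OF carriers(4) one_carrier_mat]) simp
  also have "y \<cdot>\<^sub>m (y \<cdot>\<^sub>m 1\<^sub>m nA + Jm) - (y \<cdot>\<^sub>m Jm + Jm * Jm) = (y^2 - 1) \<cdot>\<^sub>m 1\<^sub>m nA"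
    unfolding JJ by (rule eq_matI) (auto simp: power2_eq_square algebra_simps)
  finally show ?thesis .
qed

lemma detJ_sq: "det (y \<cdot>\<^sub>m 1\<^sub>m nA - Jm) ^ 2 = ((y^2 - 1)^mE)^2"
proof -
  have "det (y \<cdot>\<^sub>m 1\<^sub>m nA - Jm) ^ 2 = det (y \<cdot>\<^sub>m 1\<^sub>m nA - Jm) * det (y \<cdot>\<^sub>m 1\<^sub>m nA + Jm)"
    using detJ_sym by (simp add: power2_eq_square)
  also have "\<dots> = det ((y \<cdot>\<^sub>m 1\<^sub>m nA - Jm) * (y \<cdot>\<^sub>m 1\<^sub>m nA + Jm))"
    by (rule det_mult[symmetric, of _ nA]) auto
  also have "\<dots> = (y^2 - 1)^nA" unfolding JpJm by simp
  also have "\<dots> = ((y^2 - 1)^mE)^2" using nA_even by (simp add: power_mult[symmetric] mult.commute)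
  finally show ?thesis .
qed

lemma cpJ: "char_poly Jm = [:-1, 0, 1:]^mE"
proof -
  define p where "p = char_poly Jm"
  define q where "q = ([:-1, 0, 1:] :: complex poly)^mE"
  have "p^2 = q^2"
  proof (rule poly_eq_off_finite[of "{}"])
    fix y :: complex
    have "poly (p^2) y = det (y \<cdot>\<^sub>m 1\<^sub>m nA - Jm) ^ 2"
      unfolding p_def by (simp add: poly_char_poly_det[of Jm nA])
    also have "\<dots> = ((y^2 - 1)^mE)^2" by (rule detJ_sq)
    also have "\<dots> = poly (q^2) y" unfolding q_def by (simp add: power2_eq_square algebra_simps)
    finally show "poly (p^2) y = poly (q^2) y" .
  qed simp
  hence "(p - q) * (p + q) = 0" by (simp add: power2_eq_square algebra_simps)
  hence "p = q \<or> p = - q" by (auto simp: eq_neg_iff_add_eq_0)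
  moreover have "p \<noteq> - q"
  proof
    assume pq: "p = - q"
    have "coeff p nA = 1" unfolding p_def using degree_monic_char_poly[of Jm nA] by simp
    moreover have dq: "degree q = 2 * mE" unfolding q_def by (simp add: degree_power_eq)
    have lq: "lead_coeff q = 1" unfolding q_def by (simp add: lead_coeff_power)
    have "coeff q nA = 1" using dq lq nA_even by simp
    ultimately show False using pq by simp
  qed
  ultimately show ?thesis unfolding p_def q_def by blast
qed

end

context rg begin

lemma cST: "transpose_mat Sm \<in> carrier_mat nV nA" "transpose_mat Tm \<in> carrier_mat nV nA"
  by auto

lemma cpB_point:
  assumes es: "char_poly Am = (\<Prod>a\<leftarrow>es. [:-a, 1:])" and les: "length es = nV"
    and y: "y \<noteq> 0" and y2: "y^2 \<noteq> 1"
  shows "poly (char_poly Bm) y = (y^2 - 1)^(mE - nV) * (\<Prod>a\<leftarrow>es. y^2 - a * y + (of_nat d - 1))"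
proof -
  have c1: "y \<cdot>\<^sub>m 1\<^sub>m nA - Jm \<in> carrier_mat nA nA" by (rule minus_carrier_mat) simp
  have c2: "y \<cdot>\<^sub>m 1\<^sub>m nA + Jm \<in> carrier_mat nA nA" by simp
  have cTS: "Tm * transpose_mat Sm \<in> carrier_mat nA nA" by (rule mult_carrier_mat[of _ nA nV]) auto
  have cX: "(y \<cdot>\<^sub>m 1\<^sub>m nA - Jm) * Tm \<in> carrier_mat nA nV" using c1 by simp
  have M1: "y \<cdot>\<^sub>m 1\<^sub>m nA - Bm = (y \<cdot>\<^sub>m 1\<^sub>m nA + Jm) - Tm * transpose_mat Sm"
    unfolding Bm_def by (rule eq_matI) auto
  have "(y \<cdot>\<^sub>m 1\<^sub>m nA - Jm) * (y \<cdot>\<^sub>m 1\<^sub>m nA - Bm)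
      = (y \<cdot>\<^sub>m 1\<^sub>m nA - Jm) * (y \<cdot>\<^sub>m 1\<^sub>m nA + Jm) - (y \<cdot>\<^sub>m 1\<^sub>m nA - Jm) * (Tm * transpose_mat Sm)"
    unfolding M1 by (rule mult_minus_distrib_mat[OF c1 c2 cTS])
  also have "(y \<cdot>\<^sub>m 1\<^sub>m nA - Jm) * (Tm * transpose_mat Sm) = ((y \<cdot>\<^sub>m 1\<^sub>m nA - Jm) * Tm) * transpose_mat Sm"
    by (rule assoc_mult_mat[symmetric, OF c1 carriers(3) cST(1)])
  finally have P1: "(y \<cdot>\<^sub>m 1\<^sub>m nA - Jm) * (y \<cdot>\<^sub>m 1\<^sub>m nA - Bm)
      = (y^2 - 1) \<cdot>\<^sub>m 1\<^sub>m nA - ((y \<cdot>\<^sub>m 1\<^sub>m nA - Jm) * Tm) * transpose_mat Sm"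
    unfolding JpJm .
  have "transpose_mat Sm * ((y \<cdot>\<^sub>m 1\<^sub>m nA - Jm) * Tm) = (transpose_mat Sm * (y \<cdot>\<^sub>m 1\<^sub>m nA - Jm)) * Tm"
    by (rule assoc_mult_mat[symmetric, of _ nV nA _ nA]) (use c1 in auto)
  also have "transpose_mat Sm * (y \<cdot>\<^sub>m 1\<^sub>m nA - Jm) = transpose_mat Sm * (y \<cdot>\<^sub>m 1\<^sub>m nA) - transpose_mat Sm * Jm"
    by (rule mult_minus_distrib_mat[of _ nV nA]) auto
  also have "transpose_mat Sm * (y \<cdot>\<^sub>m 1\<^sub>m nA) = y \<cdot>\<^sub>m transpose_mat Sm"
    by (subst mult_smult_distrib[of _ nV nA]) auto
  also have "(y \<cdot>\<^sub>m transpose_mat Sm - transpose_mat Sm * Jm) * Tm = (y \<cdot>\<^sub>m transpose_mat Sm) * Tm - (transpose_mat Sm * Jm) * Tm"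
    by (rule minus_mult_distrib_mat[of _ nV nA]) auto
  also have "(y \<cdot>\<^sub>m transpose_mat Sm) * Tm = y \<cdot>\<^sub>m Am"
    unfolding ST[symmetric] by (rule mult_smult_assoc_mat) auto
  also have "(transpose_mat Sm * Jm) * Tm = of_nat d \<cdot>\<^sub>m 1\<^sub>m nV" unfolding SJ TT ..
  finally have P2: "transpose_mat Sm * ((y \<cdot>\<^sub>m 1\<^sub>m nA - Jm) * Tm) = y \<cdot>\<^sub>m Am - of_nat d \<cdot>\<^sub>m 1\<^sub>m nV" .
  have z: "y^2 - 1 \<noteq> 0" using y2 by simp
  have "det (y \<cdot>\<^sub>m 1\<^sub>m nA - Jm) * det (y \<cdot>\<^sub>m 1\<^sub>m nA - Bm) = det ((y \<cdot>\<^sub>m 1\<^sub>m nA - Jm) * (y \<cdot>\<^sub>m 1\<^sub>m nA - Bm))"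
    by (rule det_mult[symmetric, OF c1]) (rule minus_carrier_mat, simp)
  also have "\<dots> = (y^2 - 1)^(nA - nV) * det ((y^2 - 1) \<cdot>\<^sub>m 1\<^sub>m nV - transpose_mat Sm * ((y \<cdot>\<^sub>m 1\<^sub>m nA - Jm) * Tm))"
    unfolding P1 by (rule sylvester_scaled[OF cX _ z nV_le_nA]) simp
  also have "(y^2 - 1) \<cdot>\<^sub>m 1\<^sub>m nV - transpose_mat Sm * ((y \<cdot>\<^sub>m 1\<^sub>m nA - Jm) * Tm)
     = (y^2 - 1 + of_nat d) \<cdot>\<^sub>m 1\<^sub>m nV - y \<cdot>\<^sub>m Am"
    unfolding P2 by (rule eq_matI) (auto simp: algebra_simps)
  also have "det \<dots> = y^nV * poly (char_poly Am) ((y^2 - 1 + of_nat d) / y)"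
    by (rule det_shift_smult[OF carriers(1) y])
  also have "poly (char_poly Am) ((y^2 - 1 + of_nat d) / y) = (\<Prod>a\<leftarrow>es. (1/y) * (y^2 - a * y + (of_nat d - 1)))"
    unfolding es poly_prod_list map_map o_def
    by (intro arg_cong[where f = prod_list] map_cong refl) (use y in \<open>simp add: field_simps power2_eq_square\<close>)
  also have "\<dots> = (1/y)^nV * (\<Prod>a\<leftarrow>es. y^2 - a * y + (of_nat d - 1))"
    by (simp only: prod_list_map_scale les)
  finally have "det (y \<cdot>\<^sub>m 1\<^sub>m nA - Jm) * det (y \<cdot>\<^sub>m 1\<^sub>m nA - Bm) = (y^2 - 1)^(nA - nV) * (\<Prod>a\<leftarrow>es. y^2 - a * y + (of_nat d - 1))"
    using y by (simp add: power_one_over)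
  moreover have "det (y \<cdot>\<^sub>m 1\<^sub>m nA - Jm) = (y^2 - 1)^mE"
    using poly_char_poly_det[of Jm nA y] cpJ by (simp add: power2_eq_square algebra_simps)
  moreover have "(y^2 - 1)^(nA - nV) = (y^2 - 1)^mE * (y^2 - 1)^(mE - nV)"
  proof -
    have "nA - nV = mE + (mE - nV)" using nA_even mE_ge by simp
    thus ?thesis by (simp add: power_add)
  qed
  ultimately have "(y^2 - 1)^mE * det (y \<cdot>\<^sub>m 1\<^sub>m nA - Bm) = (y^2 - 1)^mE * ((y^2 - 1)^(mE - nV) * (\<Prod>a\<leftarrow>es. y^2 - a * y + (of_nat d - 1)))"
    by simp
  hence "det (y \<cdot>\<^sub>m 1\<^sub>m nA - Bm) = (y^2 - 1)^(mE - nV) * (\<Prod>a\<leftarrow>es. y^2 - a * y + (of_nat d - 1))"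
    using z by simp
  thus ?thesis using poly_char_poly_det[OF Bm_carrier, of y] by simp
qed

end

context rg begin

lemma cpPnb:
  assumes es: "char_poly Am = (\<Prod>a\<leftarrow>es. [:-a, 1:])" and les: "length es = nV"
  defines "c \<equiv> (of_nat d - 1 :: complex)"
  shows "char_poly (arc_matrix V E (nb_trans V E)) = [:-(1/c^2), 0, 1:]^(mE - nV) * (\<Prod>a\<leftarrow>es. [:1/c, -(a/c), 1:])"
proof (rule poly_eq_off_finite[of "{0, 1/c, -1/c}"])
  fix x :: complex assume x: "x \<notin> {0, 1/c, -1/c}"
  have c0: "c \<noteq> 0" unfolding c_def using d3 by simp
  have c0': "1 / c \<noteq> 0" using c0 by simp
  define y where "y = c * x"
  have y0: "y \<noteq> 0" using x c0 unfolding y_def by auto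
  have y2: "y^2 \<noteq> 1"
  proof
    assume "y^2 = 1"
    hence "y = 1 \<or> y = -1" by (metis power2_eq_1_iff)
    thus False using x c0 unfolding y_def by (auto simp: field_simps)
  qed
  have Pc: "arc_matrix V E (nb_trans V E) \<in> carrier_mat nA nA" by (simp add: arc_matrix_eq)
  have "poly (char_poly (arc_matrix V E (nb_trans V E))) x = det (x \<cdot>\<^sub>m 1\<^sub>m nA - (1/c) \<cdot>\<^sub>m Bm)"
    using poly_char_poly_det[OF Pc, of x] unfolding Pnb_eq c_def by simp
  also have "\<dots> = (1/c)^nA * poly (char_poly Bm) (x / (1/c))"
    by (rule det_shift_smult[OF Bm_carrier c0'])
  also have "x / (1/c) = y" unfolding y_def by simp
  also have "poly (char_poly Bm) y = (y^2 - 1)^(mE - nV) * (\<Prod>a\<leftarrow>es. y^2 - a * y + c)"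
    unfolding c_def by (rule cpB_point[OF es les y0 y2])
  also have "y^2 - 1 = c^2 * (x^2 - 1/c^2)" unfolding y_def using c0 by (simp add: field_simps power2_eq_square)
  also have "(\<Prod>a\<leftarrow>es. y^2 - a * y + c) = (\<Prod>a\<leftarrow>es. c^2 * (x^2 - (a/c) * x + 1/c))"
    unfolding y_def by (intro arg_cong[where f = prod_list] map_cong refl) (use c0 in \<open>simp add: field_simps power2_eq_square\<close>)
  also have "\<dots> = (c^2)^nV * (\<Prod>a\<leftarrow>es. x^2 - (a/c) * x + 1/c)"
    by (simp only: prod_list_map_scale les)
  finally have "poly (char_poly (arc_matrix V E (nb_trans V E))) x
     = (1/c)^nA * ((c^2 * (x^2 - 1/c^2))^(mE - nV) * ((c^2)^nV * (\<Prod>a\<leftarrow>es. x^2 - (a/c) * x + 1/c)))" .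
  also have "\<dots> = ((1/c)^nA * (c^2)^(mE - nV) * (c^2)^nV) * ((x^2 - 1/c^2)^(mE - nV) * (\<Prod>a\<leftarrow>es. x^2 - (a/c) * x + 1/c))"
    unfolding power_mult_distrib by (simp only: mult_ac)
  also have "(1/c)^nA * (c^2)^(mE - nV) * (c^2)^nV = 1"
  proof -
    have "(c^2)^(mE - nV) * (c^2)^nV = (c^2)^mE" using mE_ge by (simp add: power_add[symmetric])
    also have "\<dots> = c^nA" using nA_even by (simp add: power_mult[symmetric])
    finally show ?thesis using c0 by (simp add: power_one_over mult.assoc)
  qed
  finally show "poly (char_poly (arc_matrix V E (nb_trans V E))) x
    = poly ([:-(1/c^2), 0, 1:]^(mE - nV) * (\<Prod>a\<leftarrow>es. [:1/c, -(a/c), 1:])) x"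
    by (simp add: poly_prod_list o_def power2_eq_square algebra_simps)
qed simp

end

lemma root_eigen:
  fixes X :: "complex mat" and w :: "nat \<Rightarrow> nat \<Rightarrow> real"
  assumes X: "X \<in> carrier_mat n n" and Xw: "\<And>i j. i < n \<Longrightarrow> j < n \<Longrightarrow> X $$ (i,j) = of_real (w i j)"
    and root: "poly (char_poly X) \<mu> = 0"
  obtains f where "\<And>i. i < n \<Longrightarrow> (\<Sum>j<n. of_real (w i j) * f j) = \<mu> * f i"
    and "(\<Sum>i<n. (cmod (f i))^2) > 0"
proof -
  have "eigenvalue X \<mu>" using eigenvalue_root_char_poly[OF X] root by simp
  then obtain v where ev: "eigenvector X v \<mu>" unfolding eigenvalue_def by blast
  hence v: "v \<in> carrier_vec n" and v0: "v \<noteq> 0\<^sub>v n" and Xv: "X *\<^sub>v v = \<mu> \<cdot>\<^sub>v v"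
    unfolding eigenvector_def using X by auto
  define f where "f i = v $ i" for i
  have 1: "(\<Sum>j<n. of_real (w i j) * f j) = \<mu> * f i" if i: "i < n" for i
  proof -
    have "(X *\<^sub>v v) $ i = (\<Sum>j\<in>{0..<n}. X $$ (i,j) * v $ j)"
      using X v i by (auto simp: scalar_prod_def)
    also have "\<dots> = (\<Sum>j<n. of_real (w i j) * f j)"
      unfolding f_def lessThan_atLeast0 by (rule sum.cong) (auto simp: Xw i)
    finally show ?thesis using Xv i v unfolding f_def by simp
  qed
  obtain i where i: "i < n" and vi: "v $ i \<noteq> 0" using v v0 by (metis eq_vecI carrier_vecD index_zero_vec(1,2))
  have "(cmod (f i))^2 > 0" using vi unfolding f_def by simp
  also have "(cmod (f i))^2 \<le> (\<Sum>i<n. (cmod (f i))^2)"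
    by (rule member_le_sum) (use i in auto)
  finally show ?thesis using that 1 by blast
qed

lemma eig_real_bound:
  fixes X :: "complex mat" and w :: "nat \<Rightarrow> nat \<Rightarrow> real"
  assumes X: "X \<in> carrier_mat n n" and Xw: "\<And>i j. i < n \<Longrightarrow> j < n \<Longrightarrow> X $$ (i,j) = of_real (w i j)"
    and sym: "\<And>i j. w i j = w j i" and nn: "\<And>i j. w i j \<ge> 0"
    and rs: "\<And>i. i < n \<Longrightarrow> (\<Sum>j<n. w i j) \<le> D"
    and root: "poly (char_poly X) \<mu> = 0"
  shows "Im \<mu> = 0" "- D \<le> Re \<mu>" "Re \<mu> \<le> D"
proof -
  obtain f where ev: "\<And>i. i < n \<Longrightarrow> (\<Sum>j<n. of_real (w i j) * f j) = \<mu> * f i"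
    and nf: "(\<Sum>i<n. (cmod (f i))^2) > 0" using root_eigen[OF X Xw root] by blast
  define nf where "nf = (\<Sum>i<n. (cmod (f i))^2)"
  have nf0: "nf > 0" using nf unfolding nf_def .
  show "Im \<mu> = 0" using sym_eigen(1)[of w n f \<mu>, OF sym ev] nf0 unfolding nf_def by simp
  have R: "(\<Sum>i<n. (\<Sum>j<n. w i j) * (cmod (f i))^2) \<le> D * nf"
    unfolding nf_def sum_distrib_left by (rule sum_mono) (use rs in \<open>auto intro: mult_right_mono\<close>)
  have L: "(\<Sum>i<n. \<Sum>j<n. w i j * (cmod (f i - of_real s * f j))^2) \<ge> 0" for s
    by (intro sum_nonneg) (auto intro: mult_nonneg_nonneg nn)
  have "0 \<le> 2 * (\<Sum>i<n. (\<Sum>j<n. w i j) * (cmod (f i))^2) - 2 * 1 * Re \<mu> * nf"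
    using L[of 1] sym_eigen(2)[of w n f \<mu> 1, OF sym ev] unfolding nf_def by simp
  hence "Re \<mu> * nf \<le> D * nf" using R by linarith
  thus "Re \<mu> \<le> D" using nf0 by simp
  have "0 \<le> 2 * (\<Sum>i<n. (\<Sum>j<n. w i j) * (cmod (f i))^2) - 2 * (-1) * Re \<mu> * nf"
    using L[of "-1"] sym_eigen(2)[of w n f \<mu> "-1", OF sym ev] unfolding nf_def by simp
  hence "(- Re \<mu>) * nf \<le> D * nf" using R by linarith
  hence "- Re \<mu> \<le> D" using nf0 by (simp only: mult_le_cancel_right)
  thus "- D \<le> Re \<mu>" by linarith
qed

context rg begin

definition "wA i j = (if i < nV \<and> j < nV \<and> E (vs!i) (vs!j) then 1 else 0 :: real)"

lemma wA_sym: "wA i j = wA j i" unfolding wA_def using Esym by auto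
lemma wA_nn: "wA i j \<ge> 0" unfolding wA_def by auto
lemma Am_w: "i < nV \<Longrightarrow> j < nV \<Longrightarrow> Am $$ (i,j) = of_real (wA i j)"
  by (simp add: Am_def wA_def)

lemma wA_rowsum: "i < nV \<Longrightarrow> (\<Sum>j<nV. wA i j) = d"
proof -
  assume i: "i < nV"
  have "(\<Sum>j<nV. wA i j) = (\<Sum>j=0..<nV. (\<lambda>x. if E (vs!i) x then 1 else 0 :: real) (vs!j))"
    unfolding lessThan_atLeast0 wA_def using i by (intro sum.cong) auto
  also have "\<dots> = (\<Sum>x\<in>V. if E (vs!i) x then 1 else 0)" by (rule sum_V)
  also have "\<dots> = real (card {x\<in>V. E (vs!i) x})" using finV by (simp add: sum.If_cases Int_def)
  also have "\<dots> = d" using degd vs_in[OF i] by simp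
  finally show ?thesis .
qed

lemma nV_pos: "nV > 0" using nV_ge by simp

lemma roots_A:
  assumes "poly (char_poly Am) \<mu> = 0"
  shows "Im \<mu> = 0" "- real d \<le> Re \<mu>" "Re \<mu> \<le> real d"
  using eig_real_bound[OF carriers(1) Am_w wA_sym wA_nn _ assms, of "real d"] wA_rowsum by auto

definition "wk k i j = (if i \<noteq> k \<and> j \<noteq> k then wA i j else 0)"

lemma wk_sym: "wk k i j = wk k j i" unfolding wk_def using wA_sym by auto
lemma wk_nn: "wk k i j \<ge> 0" unfolding wk_def using wA_nn by auto
lemma Xk_w: "i < nV \<Longrightarrow> j < nV \<Longrightarrow> mat_erase Am k k $$ (i,j) = of_real (wk k i j)"
  by (simp add: mat_erase_def Am_w wk_def)
lemma Xk_carrier: "mat_erase Am k k \<in> carrier_mat nV nV" by simp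

lemma wk_rowsum_le: "i < nV \<Longrightarrow> (\<Sum>j<nV. wk k i j) \<le> d"
proof -
  assume i: "i < nV"
  have "(\<Sum>j<nV. wk k i j) \<le> (\<Sum>j<nV. wA i j)"
    by (rule sum_mono) (auto simp: wk_def wA_nn)
  thus ?thesis using wA_rowsum[OF i] by simp
qed

lemma wk_rowsum_nb: "i < nV \<Longrightarrow> k < nV \<Longrightarrow> i \<noteq> k \<Longrightarrow> E (vs!i) (vs!k) \<Longrightarrow> (\<Sum>j<nV. wk k i j) = real d - 1"
proof -
  assume i: "i < nV" and k: "k < nV" and ik: "i \<noteq> k" and E: "E (vs!i) (vs!k)"
  have "(\<Sum>j<nV. wk k i j) = (\<Sum>j<nV. wA i j - (if j = k then 1 else 0))"
    by (rule sum.cong) (auto simp: wk_def wA_def ik E i k)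
  also have "\<dots> = real d - 1" using k by (simp add: sum_subtractf wA_rowsum[OF i])
  finally show ?thesis .
qed

lemma no_d_root: assumes k: "k < nV" shows "poly (char_poly (mat_erase Am k k)) (of_nat d) \<noteq> 0"
proof
  assume root: "poly (char_poly (mat_erase Am k k)) (of_nat d) = 0"
  obtain f where ev: "\<And>i. i < nV \<Longrightarrow> (\<Sum>j<nV. of_real (wk k i j) * f j) = of_nat d * f i"
    and nf: "(\<Sum>i<nV. (cmod (f i))^2) > 0"
    using root_eigen[OF Xk_carrier Xk_w root] by blast
  define nf where "nf = (\<Sum>i<nV. (cmod (f i))^2)"
  define S1 where "S1 = (\<Sum>i<nV. \<Sum>j<nV. wk k i j * (cmod (f i - of_real 1 * f j))^2)"
  define S2 where "S2 = (\<Sum>i<nV. (real d - (\<Sum>j<nV. wk k i j)) * (cmod (f i))^2)"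
  have "S1 = 2 * (\<Sum>i<nV. (\<Sum>j<nV. wk k i j) * (cmod (f i))^2) - 2 * 1 * Re (of_nat d) * nf"
    unfolding S1_def nf_def by (rule sym_eigen(2)[of "wk k" nV f "of_nat d" 1, OF wk_sym ev]) auto
  hence S1e: "S1 = 2 * (\<Sum>i<nV. (\<Sum>j<nV. wk k i j) * (cmod (f i))^2) - 2 * real d * nf" by simp
  have S2e: "S2 = real d * nf - (\<Sum>i<nV. (\<Sum>j<nV. wk k i j) * (cmod (f i))^2)"
    unfolding S2_def nf_def by (simp only: left_diff_distrib sum_subtractf sum_distrib_left)
  have S12: "S1 = - 2 * S2" using S1e S2e by simp
  have S1nn: "S1 \<ge> 0" unfolding S1_def by (intro sum_nonneg) (auto intro: mult_nonneg_nonneg wk_nn)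
  have S2t: "\<And>i. i < nV \<Longrightarrow> (real d - (\<Sum>j<nV. wk k i j)) * (cmod (f i))^2 \<ge> 0"
    using wk_rowsum_le by (auto intro: mult_nonneg_nonneg)
  hence S2nn: "S2 \<ge> 0" unfolding S2_def by (intro sum_nonneg) auto
  have S1z: "S1 = 0" and S2z: "S2 = 0" using S12 S1nn S2nn by auto
  have T2: "\<And>i. i < nV \<Longrightarrow> (real d - (\<Sum>j<nV. wk k i j)) * (cmod (f i))^2 = 0"
    using S2z S2t unfolding S2_def by (subst (asm) sum_nonneg_eq_0_iff) auto
  have T1: "\<And>i j. i < nV \<Longrightarrow> j < nV \<Longrightarrow> wk k i j * (cmod (f i - f j))^2 = 0"
  proof -
    fix i j assume i: "i < nV" and j: "j < nV"
    have inner: "\<And>i. (\<Sum>j<nV. wk k i j * (cmod (f i - of_real 1 * f j))^2) \<ge> 0"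
      by (intro sum_nonneg) (auto intro: mult_nonneg_nonneg wk_nn)
    have "(\<Sum>j<nV. wk k i j * (cmod (f i - of_real 1 * f j))^2) = 0"
      using S1z inner i unfolding S1_def by (subst (asm) sum_nonneg_eq_0_iff) auto
    hence "wk k i j * (cmod (f i - of_real 1 * f j))^2 = 0"
      using j by (subst (asm) sum_nonneg_eq_0_iff) (auto intro: mult_nonneg_nonneg wk_nn)
    thus "wk k i j * (cmod (f i - f j))^2 = 0" by simp
  qed
  have fk: "f k = 0"
  proof -
    have "(\<Sum>j<nV. wk k k j) = 0" by (simp add: wk_def)
    thus ?thesis using T2[OF k] d3 by simp
  qed
  have fnb: "f i = 0" if i: "i < nV" and E: "E (vs!i) (vs!k)" for i
  proof -
    have ik: "i \<noteq> k" using E Eirr by auto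
    have "real d - (\<Sum>j<nV. wk k i j) = 1" using wk_rowsum_nb[OF i k ik E] by simp
    thus ?thesis using T2[OF i] by simp
  qed
  have fedge: "f i = f j" if i: "i < nV" and j: "j < nV" and ik: "i \<noteq> k" and jk: "j \<noteq> k" and E: "E (vs!i) (vs!j)" for i j
  proof -
    have "wk k i j = 1" using i j ik jk E by (simp add: wk_def wA_def)
    thus ?thesis using T1[OF i j] by simp
  qed
  have allz: "\<forall>i<nV. vs!i = x \<longrightarrow> f i = 0" if "E\<^sup>*\<^sup>* x (vs!k)" for x
    using that
  proof (induction rule: converse_rtranclp_induct)
    case base
    then show ?case using fk k vs_inj by auto
  next
    case (step x z)
    show ?case
    proof (intro allI impI)
      fix i assume i: "i < nV" and xi: "vs!i = x"
      show "f i = 0"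
      proof (cases "i = k")
        case True thus ?thesis using fk by simp
      next
        case ik: False
        show ?thesis
        proof (cases "z = vs!k")
          case True thus ?thesis using fnb[OF i] step.hyps(1) xi by simp
        next
          case False
          have "z \<in> V" using step.hyps(1) EV by blast
          then obtain j where j: "j < nV" and zj: "vs!j = z" using vs by (metis in_set_conv_nth)
          have jk: "j \<noteq> k" using False zj by auto
          have "f i = f j" using fedge[OF i j ik jk] step.hyps(1) xi zj by simp
          thus ?thesis using step.IH j zj by simp
        qed
      qed
    qed
  qed
  have "\<forall>i<nV. f i = 0"
  proof (intro allI impI)
    fix i assume i: "i < nV"
    have "E\<^sup>*\<^sup>* (vs!i) (vs!k)" using conn vs_in[OF i] vs_in[OF k] unfolding connected_graph_def by blast
    thus "f i = 0" using allz i by blast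
  qed
  hence "nf = 0" unfolding nf_def by simp
  thus False using nf unfolding nf_def by simp
qed

end

lemma prod_pos_real:
  assumes "\<forall>\<mu>\<in>set ls. Im \<mu> = 0 \<and> Re \<mu> < D"
  shows "\<exists>r>0. (\<Prod>\<mu>\<leftarrow>ls. (complex_of_real D - \<mu>)) = complex_of_real r"
  using assms
proof (induction ls)
  case Nil thus ?case by (intro exI[of _ 1]) auto
next
  case (Cons \<mu> ls)
  then obtain r where r: "r > 0" "(\<Prod>\<mu>\<leftarrow>ls. (complex_of_real D - \<mu>)) = complex_of_real r" by auto
  have m: "complex_of_real D - \<mu> = complex_of_real (D - Re \<mu>)" using Cons.prems by (simp add: complex_eq_iff)
  show ?case using r m Cons.prems by (intro exI[of _ "(D - Re \<mu>) * r"]) auto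
qed

lemma proots_lin: "proots (\<Prod>a\<leftarrow>es. [:-a, 1:]) = mset (es :: complex list)"
proof (induction es)
  case (Cons a es)
  have "proots ([:-a, 1:] * (\<Prod>a\<leftarrow>es. [:-a, 1:])) = proots [:-a, 1:] + proots (\<Prod>a\<leftarrow>es. [:-a, 1:])"
    by (rule proots_mult) (auto simp: prod_list_zero_iff)
  thus ?case using Cons by simp
qed simp

context rg begin

lemma Xk_val: assumes k: "k < nV"
  shows "\<exists>r>0. poly (char_poly (mat_erase Am k k)) (of_nat d) = complex_of_real r"
proof -
  obtain ls where ls: "char_poly (mat_erase Am k k) = (\<Prod>a\<leftarrow>ls. [:-a, 1:])"
    using char_poly_factorized[OF Xk_carrier] by blast
  have "\<forall>\<mu>\<in>set ls. Im \<mu> = 0 \<and> Re \<mu> < real d"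
  proof
    fix \<mu> assume m: "\<mu> \<in> set ls"
    have root: "poly (char_poly (mat_erase Am k k)) \<mu> = 0"
      unfolding ls poly_prod_list using m by (auto simp: prod_list_zero_iff)
    have b: "Im \<mu> = 0" "Re \<mu> \<le> real d"
      using eig_real_bound[OF Xk_carrier Xk_w wk_sym wk_nn _ root, of "real d"] wk_rowsum_le by auto
    have "\<mu> \<noteq> of_nat d" using no_d_root[OF k] root by auto
    hence "Re \<mu> \<noteq> real d" using b(1) by (auto simp: complex_eq_iff)
    thus "Im \<mu> = 0 \<and> Re \<mu> < real d" using b by auto
  qed
  then obtain r where r: "r > 0" "(\<Prod>\<mu>\<leftarrow>ls. (complex_of_real (real d) - \<mu>)) = complex_of_real r"
    using prod_pos_real by blast
  have "poly (char_poly (mat_erase Am k k)) (of_nat d) = (\<Prod>\<mu>\<leftarrow>ls. (complex_of_real (real d) - \<mu>))"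
    unfolding ls poly_prod_list by (simp add: o_def)
  thus ?thesis using r by auto
qed

lemma pderiv_d: "poly (pderiv (char_poly Am)) (of_nat d) \<noteq> 0"
proof
  assume z: "poly (pderiv (char_poly Am)) (of_nat d) = 0"
  have "\<forall>k. \<exists>r. k < nV \<longrightarrow> r > 0 \<and> poly (char_poly (mat_erase Am k k)) (of_nat d) = complex_of_real r"
    using Xk_val by blast
  then obtain rf where rf: "\<And>k. k < nV \<Longrightarrow> rf k > 0 \<and> poly (char_poly (mat_erase Am k k)) (of_nat d) = complex_of_real (rf k)"
    by metis
  have "poly (monom 1 1 * pderiv (char_poly Am)) (of_nat d) = poly (\<Sum>k<nV. char_poly (mat_erase Am k k)) (of_nat d)"
    by (subst pderiv_char_poly_mat_erase[OF carriers(1)]) simp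
  hence "0 = (\<Sum>k<nV. poly (char_poly (mat_erase Am k k)) (of_nat d))" using z by (simp add: poly_sum)
  also have "\<dots> = complex_of_real (\<Sum>k<nV. rf k)" unfolding of_real_sum using rf by (intro sum.cong) auto
  finally have "(\<Sum>k<nV. rf k) = 0" by (metis of_real_eq_0_iff)
  moreover have "(\<Sum>k<nV. rf k) > 0" using rf nV_pos by (intro sum_pos) auto
  ultimately show False by simp
qed

lemma d_root: "poly (char_poly Am) (of_nat d) = 0"
proof -
  define v where "v = vec nV (\<lambda>_. 1 :: complex)"
  have "Am *\<^sub>v v = of_nat d \<cdot>\<^sub>v v"
  proof (rule eq_vecI)
    fix i assume "i < dim_vec (of_nat d \<cdot>\<^sub>v v)"
    hence i: "i < nV" unfolding v_def by simp
    have "(Am *\<^sub>v v) $ i = (\<Sum>j\<in>{0..<nV}. Am $$ (i,j) * 1)" using i unfolding v_def by (simp add: scalar_prod_def)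
    also have "\<dots> = complex_of_real (\<Sum>j<nV. wA i j)"
      unfolding lessThan_atLeast0 of_real_sum by (rule sum.cong) (auto simp: Am_w i)
    finally show "(Am *\<^sub>v v) $ i = (of_nat d \<cdot>\<^sub>v v) $ i" using i wA_rowsum[OF i] unfolding v_def by simp
  qed (simp add: v_def)
  moreover have "v \<noteq> 0\<^sub>v nV" unfolding v_def using nV_pos by (metis index_vec index_zero_vec(1) one_neq_zero)
  ultimately have "eigenvector Am v (of_nat d)" unfolding eigenvector_def v_def by simp
  hence "eigenvalue Am (of_nat d)" unfolding eigenvalue_def by blast
  thus ?thesis using eigenvalue_root_char_poly[OF carriers(1)] by simp
qed

lemma order_d: "Polynomial.order (of_nat d) (char_poly Am) = 1"
proof -
  have p0: "char_poly Am \<noteq> 0" using degree_monic_char_poly[OF carriers(1)] by auto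
  have "Polynomial.order (of_nat d) (char_poly Am) = Suc (Polynomial.order (of_nat d) (pderiv (char_poly Am)))"
    by (rule order_pderiv[OF p0 d_root])
  moreover have "Polynomial.order (of_nat d) (pderiv (char_poly Am)) = 0"
    using pderiv_d order_root by blast
  ultimately show ?thesis by simp
qed

lemma proots_es: "char_poly Am = (\<Prod>a\<leftarrow>es. [:-a, 1:]) \<Longrightarrow> proots (char_poly Am) = mset es"
proof -
  assume es: "char_poly Am = (\<Prod>a\<leftarrow>es. [:-a, 1:])"
  have "proots (\<Prod>a\<leftarrow>es. [:-a, 1:]) = mset es" by (rule proots_lin)
  thus ?thesis using es by simp
qed

lemma count_d: "char_poly Am = (\<Prod>a\<leftarrow>es. [:-a, 1:]) \<Longrightarrow> count (mset es) (of_nat d) = 1"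
proof -
  assume es: "char_poly Am = (\<Prod>a\<leftarrow>es. [:-a, 1:])"
  have p0: "char_poly Am \<noteq> 0" using degree_monic_char_poly[OF carriers(1)] by auto
  have "count (proots (char_poly Am)) (of_nat d) = 1" using order_d p0 by simp
  thus ?thesis using proots_es[OF es] by simp
qed

end

lemma sim_mult:
  fixes P :: "'a::comm_ring_1 mat"
  assumes P: "P \<in> carrier_mat n n" and Q: "Q \<in> carrier_mat n n" and M1: "M1 \<in> carrier_mat n n"
    and M2: "M2 \<in> carrier_mat n n" and QP: "Q * P = 1\<^sub>m n"
  shows "(P * M1 * Q) * (P * M2 * Q) = P * (M1 * M2) * Q"
proof -
  have "(P * M1 * Q) * (P * M2 * Q) = P * (M1 * ((Q * P) * (M2 * Q)))"
    using P Q M1 M2 by (simp add: assoc_mult_mat[of _ n n _ n _ n])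
  also have "\<dots> = P * (M1 * (M2 * Q))" unfolding QP using M2 Q by simp
  also have "\<dots> = P * (M1 * M2) * Q" using P Q M1 M2 by (simp add: assoc_mult_mat[of _ n n _ n _ n])
  finally show ?thesis .
qed

lemma sim_mtr:
  fixes P :: "'a::comm_ring_1 mat"
  assumes P: "P \<in> carrier_mat n n" and Q: "Q \<in> carrier_mat n n" and M: "M \<in> carrier_mat n n"
    and QP: "Q * P = 1\<^sub>m n"
  shows "mtr (P * M * Q) = mtr M"
proof -
  have "mtr ((P * M) * Q) = mtr (Q * (P * M))" by (rule mtr_comm) (use P M Q in auto)
  also have "Q * (P * M) = (Q * P) * M" using P Q M by (simp add: assoc_mult_mat[of _ n n _ n _ n])
  finally show ?thesis unfolding QP using M by simp
qed

lemma mtr_diag_pow: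
  fixes B :: "'a::comm_ring_1 mat"
  assumes B: "B \<in> carrier_mat n n" and ut: "upper_triangular B"
  shows "mtr B = sum_list (diag_mat B)"
    "mtr (B * B) = sum_list (map (\<lambda>a. a^2) (diag_mat B))"
    "mtr (B * B * B) = sum_list (map (\<lambda>a. a^3) (diag_mat B))"
proof -
  have dm: "sum_list (map f (diag_mat B)) = (\<Sum>i<n. f (B $$ (i,i)))" for f :: "'a \<Rightarrow> 'a"
    using B unfolding diag_mat_def by (simp add: interv_sum_list_conv_sum_set_nat lessThan_atLeast0 o_def)
  show "mtr B = sum_list (diag_mat B)" using dm[of id] B by (simp add: mtr_def)
  have BB: "B * B \<in> carrier_mat n n" "upper_triangular (B * B)" using upper_tri_mult[OF B B ut ut] B by auto
  show "mtr (B * B) = sum_list (map (\<lambda>a. a^2) (diag_mat B))"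
    unfolding dm mtr_def using B upper_tri_mult(2)[OF B B ut ut] by (simp add: power2_eq_square)
  show "mtr (B * B * B) = sum_list (map (\<lambda>a. a^3) (diag_mat B))"
    unfolding dm mtr_def using B upper_tri_mult(2)[OF BB(1) B BB(2) ut] upper_tri_mult(2)[OF B B ut ut]
    by (simp add: power3_eq_cube)
qed

context rg begin

lemma traces:
  assumes es: "char_poly Am = (\<Prod>a\<leftarrow>es. [:-a, 1:])"
  shows "sum_list es = 0" "sum_list (map (\<lambda>a. a^2) es) = of_nat (nV * d)"
    "sum_list (map (\<lambda>a. a^3) es) = mtr (Am * Am * Am)"
proof -
  obtain B P Q :: "complex mat" where sd: "schur_decomposition Am es = (B,P,Q)" by (cases "schur_decomposition Am es") auto
  have sch: "similar_mat_wit Am B P Q" "upper_triangular B" "diag_mat B = es"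
    using schur_decomposition[OF carriers(1) es sd] by auto
  have Bc: "B \<in> carrier_mat nV nV" and Pc: "P \<in> carrier_mat nV nV" and Qc: "Q \<in> carrier_mat nV nV"
    and QP: "Q * P = 1\<^sub>m nV" and AB: "Am = P * B * Q"
    using sch(1) unfolding similar_mat_wit_def Let_def by auto
  have A2: "Am * Am = P * (B * B) * Q" unfolding AB by (rule sim_mult[OF Pc Qc Bc Bc QP])
  have A3: "Am * Am * Am = P * (B * B * B) * Q"
    unfolding A2 by (subst AB, rule sim_mult[OF Pc Qc _ Bc QP]) (use Bc in auto)
  have t1: "mtr Am = sum_list es"
    using sim_mtr[OF Pc Qc Bc QP] mtr_diag_pow(1)[OF Bc sch(2)] sch(3) AB by simp
  have t2: "mtr (Am * Am) = sum_list (map (\<lambda>a. a^2) es)"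
    unfolding A2 using sim_mtr[OF Pc Qc _ QP, of "B * B"] mtr_diag_pow(2)[OF Bc sch(2)] sch(3) Bc by simp
  have t3: "mtr (Am * Am * Am) = sum_list (map (\<lambda>a. a^3) es)"
    unfolding A3 using sim_mtr[OF Pc Qc _ QP, of "B * B * B"] mtr_diag_pow(3)[OF Bc sch(2)] sch(3) Bc by simp
  have "mtr Am = 0" unfolding mtr_def by (rule sum.neutral) (auto simp: Am_def Eirr)
  thus "sum_list es = 0" using t1 by simp
  have "mtr (Am * Am) = (\<Sum>i<nV. (of_nat d :: complex))"
    unfolding mtr_def
  proof (rule sum.cong)
    fix i assume "i \<in> {..<nV}"
    hence i: "i < nV" by simp
    have "(Am * Am) $$ (i,i) = (\<Sum>j\<in>{0..<nV}. Am $$ (i,j) * Am $$ (j,i))" using i by (simp add: scalar_prod_def)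
    also have "\<dots> = complex_of_real (\<Sum>j<nV. wA i j)"
      unfolding lessThan_atLeast0 of_real_sum
      by (rule sum.cong) (auto simp: Am_w i wA_sym, auto simp: wA_def)
    finally show "(Am * Am) $$ (i,i) = of_nat d" using wA_rowsum[OF i] by simp
  qed simp
  thus "sum_list (map (\<lambda>a. a^2) es) = of_nat (nV * d)" using t2 by simp
  show "sum_list (map (\<lambda>a. a^3) es) = mtr (Am * Am * Am)" using t3 by simp
qed

end

lemma tangent_ineq:
  fixes x t D :: real
  assumes "x < D" "t < D"
  shows "1 / (D - t) + (x - t) / (D - t)^2 \<le> 1 / (D - x)"
proof -
  define u where "u = D - x"
  define w where "w = D - t"
  have u: "u > 0" and w: "w > 0" using assms unfolding u_def w_def by auto
  have xt: "x - t = w - u" unfolding u_def w_def by simp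
  have "1/u - (1/w + (w - u)/w^2) = (w - u)^2 / (u * w^2)"
    using u w by (simp add: field_simps power2_eq_square)
  moreover have "(w - u)^2 / (u * w^2) \<ge> 0" using u w by simp
  ultimately show ?thesis unfolding xt by (simp add: u_def[symmetric] w_def[symmetric])
qed

lemma cubic_ineq:
  fixes x :: real
  assumes "x < 3"
  shows "(x^3 + 9*x^2 + 36*x + 108) / 324 \<le> 1 / (3 - x)"
proof -
  have p: "3 - x > 0" using assms by simp
  have "(x^3 + 9*x^2 + 36*x + 108) * (3 - x) = 324 - (x * (x + 3))^2"
    by (simp add: power2_eq_square power3_eq_cube algebra_simps)
  hence "(x^3 + 9*x^2 + 36*x + 108) * (3 - x) \<le> 324" by (smt (verit) zero_le_power2)
  hence "(x^3 + 9*x^2 + 36*x + 108) \<le> 324 / (3 - x)" using p by (simp add: le_divide_eq)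
  thus ?thesis by simp
qed

lemma final_ineq:
  fixes x :: "nat \<Rightarrow> real" and n d :: nat
  assumes nm: "n = m + 1" and nd: "n \<ge> d + 1" and d3: "d \<ge> 3"
    and bnd: "\<And>i. i < m \<Longrightarrow> x i < d"
    and s1: "(\<Sum>i<m. x i) = - real d"
    and ev: "even (n * d)"
    and n4: "\<not> (d = 3 \<and> n = 4)" and n5: "\<not> (d = 4 \<and> n = 5)"
    and n6: "d = 3 \<and> n = 6 \<Longrightarrow> (\<Sum>i<m. (x i)^2) = 9 \<and> (\<Sum>i<m. (x i)^3) \<ge> -26"
  shows "2 * (\<Sum>i<m. 1 / (real d - x i)) > real n / real d + 1 / (real d - 2)"
proof (cases "d = 3 \<and> n = 6")
  case True
  hence d: "d = 3" and m: "m = 5" using nm by auto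
  have "(\<Sum>i<m. ((x i)^3 + 9*(x i)^2 + 36*(x i) + 108) / 324) \<le> (\<Sum>i<m. 1 / (real d - x i))"
    by (rule sum_mono) (use bnd d cubic_ineq in auto)
  moreover have "(\<Sum>i<m. ((x i)^3 + 9*(x i)^2 + 36*(x i) + 108) / 324)
     = ((\<Sum>i<m. (x i)^3) + 9 * (\<Sum>i<m. (x i)^2) + 36 * (\<Sum>i<m. x i) + 108 * m) / 324"
    by (simp add: sum_divide_distrib[symmetric] sum.distrib sum_distrib_left)
  ultimately have "(\<Sum>i<m. 1 / (real d - x i)) \<ge> (-26 + 81 - 108 + 540) / 324"
    using n6 True s1 d m by simp
  thus ?thesis using True by simp
next
  case False
  have m1: "m \<ge> 1" using nm nd d3 by simp
  define t where "t = - real d / real m"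
  have "t \<le> 0" unfolding t_def by (simp add: divide_nonpos_nonneg)
  hence td: "t < d" using d3 by linarith
  have "(\<Sum>i<m. 1 / (real d - t) + (x i - t) / (real d - t)^2) \<le> (\<Sum>i<m. 1 / (real d - x i))"
    by (rule sum_mono) (use bnd td tangent_ineq in auto)
  moreover have "(\<Sum>i<m. 1 / (real d - t) + (x i - t) / (real d - t)^2) = real m / (real d - t)"
  proof -
    have "(\<Sum>i<m. (x i - t) / (real d - t)^2) = ((\<Sum>i<m. x i) - m * t) / (real d - t)^2"
      by (simp add: sum_divide_distrib[symmetric] sum_subtractf)
    also have "(\<Sum>i<m. x i) - m * t = 0" unfolding s1 t_def using m1 by simp
    finally show ?thesis by (simp add: sum.distrib)
  qed
  moreover have "real d - t = real d * real n / real m" unfolding t_def using m1 nm by (simp add: field_simps)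
  ultimately have S: "(\<Sum>i<m. 1 / (real d - x i)) \<ge> (real m)^2 / (real d * real n)"
    using m1 by (simp add: power2_eq_square)
  have cases: "(d = 3 \<and> n \<ge> 8) \<or> (d = 4 \<and> n \<ge> 6) \<or> (d \<ge> 5 \<and> n \<ge> 6)"
  proof -
    have "d = 3 \<or> d = 4 \<or> d \<ge> 5" using d3 by auto
    moreover have "d = 3 \<Longrightarrow> n \<ge> 8"
    proof -
      assume d: "d = 3"
      hence "even n" using ev by auto
      moreover have "n \<noteq> 4" "n \<noteq> 6" using n4 False d by auto
      moreover have "n \<ge> 4" using nd d by simp
      ultimately show "n \<ge> 8" by presburger
    qed
    moreover have "d = 4 \<Longrightarrow> n \<ge> 6" using n5 nd by auto
    moreover have "d \<ge> 5 \<Longrightarrow> n \<ge> 6" using nd by auto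
    ultimately show ?thesis by blast
  qed
  have key: "2 * (real m)^2 * (real d - 2) > (real n)^2 * (real d - 2) + real d * real n"
  proof -
    have mn: "real m = real n - 1" using nm by simp
    from cases show ?thesis
    proof (elim disjE conjE)
      assume "d = 3" "n \<ge> 8"
      hence a: "real n \<ge> 8" "real d = 3" by auto
      have "real n * (real n - 7) \<ge> 0" using a by simp
      hence e: "real n * real n \<ge> 7 * real n" by (simp add: algebra_simps)
      show ?thesis unfolding mn using a e by (simp add: power2_eq_square algebra_simps, linarith)
    next
      assume "d = 4" "n \<ge> 6"
      hence a: "real n \<ge> 6" "real d = 4" by auto
      have "real n * (real n - 6) \<ge> 0" using a by simp
      hence e: "real n * real n \<ge> 6 * real n" by (simp add: algebra_simps)
      show ?thesis unfolding mn using a e by (simp add: power2_eq_square algebra_simps, linarith)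
    next
      assume "d \<ge> 5" "n \<ge> 6"
      hence a: "real n \<ge> 6" "real d \<ge> 5" by auto
      have "real n * (real n - 5) \<ge> 0" using a by simp
      hence "(real n)^2 - 5 * real n + 2 \<ge> 0" by (simp add: power2_eq_square algebra_simps)
      hence h1: "(real d - 5) * ((real n)^2 - 5 * real n + 2) \<ge> 0"
        using a by (intro mult_nonneg_nonneg) auto
      have h2: "real n * (3 * real n - 17) \<ge> 0" using a by simp
      define N where "N = real n"
      define D where "D = real d"
      have h1': "D*N*N - 5*D*N + 2*D - 5*N*N + 25*N - 10 \<ge> 0"
      proof -
        have "(real d - 5) * ((real n)^2 - 5 * real n + 2) = D*N*N - 5*D*N + 2*D - 5*N*N + 25*N - 10"
          unfolding N_def D_def by (simp add: power2_eq_square algebra_simps)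
        thus ?thesis using h1 by simp
      qed
      have h2': "3*N*N - 17*N \<ge> 0" using h2 unfolding N_def by (simp add: algebra_simps)
      have N6: "N \<ge> 6" using a unfolding N_def by simp
      have eq: "2 * (real n - 1)^2 * (real d - 2) - ((real n)^2 * (real d - 2) + real d * real n)
          = D*N*N - 5*D*N + 2*D - 2*N*N + 8*N - 4"
        unfolding N_def D_def by (simp add: power2_eq_square algebra_simps)
      have "D*N*N - 5*D*N + 2*D - 2*N*N + 8*N - 4 > 0" using h1' h2' N6 by linarith
      thus ?thesis unfolding mn using eq by linarith
    qed
  qed
  have dpos: "real d - 2 > 0" "real d > 0" "real n > 0" using d3 nd by auto
  have pos: "real d * real n * (real d - 2) > 0" using dpos by simp
  have e1: "real n / real d + 1 / (real d - 2) = ((real n)^2 * (real d - 2) + real d * real n) / (real d * real n * (real d - 2))"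
    using dpos by (simp add: field_simps power2_eq_square)
  have e2: "2 * ((real m)^2 / (real d * real n)) = (2 * (real m)^2 * (real d - 2)) / (real d * real n * (real d - 2))"
    using dpos by (simp add: field_simps power2_eq_square)
  have "real n / real d + 1 / (real d - 2) < 2 * ((real m)^2 / (real d * real n))"
    unfolding e1 e2 using key pos by (rule divide_strict_right_mono)
  thus ?thesis using S by simp
qed

lemma repeat1: "repeat_mset k {#a#} = replicate_mset k a"
  by (induction k) auto

lemma repeat2: "repeat_mset k {#a, b#} = replicate_mset k a + replicate_mset k b"
  by (induction k) auto

lemma proots_prod_map:
  fixes f :: "'b \<Rightarrow> complex poly"
  assumes "\<And>a. a \<in> set xs \<Longrightarrow> f a \<noteq> 0"
  shows "proots (prod_list (map f xs)) = sum_list (map (\<lambda>a. proots (f a)) xs)"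
  using assms
proof (induction xs)
  case (Cons a xs)
  have "proots (f a * prod_list (map f xs)) = proots (f a) + proots (prod_list (map f xs))"
    by (rule proots_mult) (use Cons.prems in \<open>auto simp: prod_list_zero_iff\<close>)
  thus ?case using Cons by simp
qed simp

lemma proots_two: "proots ([:-r1, 1:] * [:-r2, 1:]) = {#r1, r2#}" for r1 r2 :: complex
  by (subst proots_mult) auto

lemma quad_sum:
  fixes a c :: complex
  assumes c: "c \<noteq> 0" and ad: "a \<noteq> c + 1"
  shows "sum_mset (image_mset (\<lambda>\<rho>. 1 / (1 - \<rho>)) (proots [:1/c, -(a/c), 1:])) = (2*c - a) / (c + 1 - a)"
proof -
  obtain r1 r2 where r: "[:1/c, -(a/c), 1:] = [:-r1, 1:] * [:-r2, 1:]" "r1 + r2 = a/c" "r1 * r2 = 1/c"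
    using quadratic_split[of "1/c" "-(a/c)"] by auto
  have prod: "(1 - r1) * (1 - r2) = (c + 1 - a) / c"
    using r c by (simp add: field_simps)
  have nz: "(c + 1 - a) / c \<noteq> 0" using c ad by simp
  hence n1: "1 - r1 \<noteq> 0" and n2: "1 - r2 \<noteq> 0" using prod by auto
  have "1 / (1 - r1) + 1 / (1 - r2) = (2 - (r1 + r2)) / ((1 - r1) * (1 - r2))"
    using n1 n2 by (simp add: field_simps)
  also have "\<dots> = (2*c - a) / (c + 1 - a)"
  proof -
    have a1: "2 - a/c = (2*c - a)/c" using c by (simp add: field_simps)
    have a2: "c + 1 - a \<noteq> 0" using ad by auto
    show ?thesis unfolding prod r(2) a1 using c a2 by simp
  qed
  finally show ?thesis unfolding r(1) proots_two by simp
qed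

context rg begin

definition "cc = (of_nat d - 1 :: complex)"

lemma cc0: "cc \<noteq> 0" unfolding cc_def using d3 by simp
lemma cc1: "cc + 1 = of_nat d" unfolding cc_def by simp

lemma Ke_formula:
  assumes es: "char_poly Am = (\<Prod>a\<leftarrow>es. [:-a, 1:])" and les: "length es = nV"
    and rl: "mset es = add_mset (of_nat d) (mset rl)"
  shows "K_e V E = of_nat (nA - nV) + sum_list (map (\<lambda>a. 1 / (1 - a / of_nat d)) rl)"
proof -
  have d0: "(of_nat d :: complex) \<noteq> 0" using d3 by simp
  have B: "proots (\<Prod>a\<leftarrow>es. [:-(a / of_nat d), 1:]) = mset (map (\<lambda>a. a / of_nat d) es)"
    using proots_lin[of "map (\<lambda>a. a / of_nat d) es"] by (simp add: map_map o_def)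
  have "proots (char_poly (arc_matrix V E (edge_trans V E)))
      = replicate_mset (nA - nV) 0 + mset (map (\<lambda>a. a / of_nat d) es)"
    unfolding cpPe[OF es les] B[symmetric]
    by (subst proots_mult) (auto simp: proots_power repeat1 prod_list_zero_iff)
  also have "mset (map (\<lambda>a. a / of_nat d) es) = add_mset 1 (image_mset (\<lambda>a. a / of_nat d) (mset rl))"
    using rl d0 by simp
  finally have pr: "proots (char_poly (arc_matrix V E (edge_trans V E))) - {#1#}
      = replicate_mset (nA - nV) 0 + image_mset (\<lambda>a. a / of_nat d) (mset rl)" by simp
  show ?thesis unfolding K_e_def kemeny_def pr
    by (simp add: sum_mset_sum_list[symmetric] multiset.map_comp o_def)
qed

lemma Knb_formula:
  assumes es: "char_poly Am = (\<Prod>a\<leftarrow>es. [:-a, 1:])" and les: "length es = nV"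
    and rl: "mset es = add_mset (of_nat d) (mset rl)" and rld: "of_nat d \<notin> set rl"
  shows "K_nb V E = of_nat (mE - nV) * (1 / (1 - 1/cc) + 1 / (1 + 1/cc)) + 1 / (1 - 1/cc)
     + sum_list (map (\<lambda>a. (2*cc - a) / (cc + 1 - a)) rl)"
proof -
  define Q where "Q a = [:1/cc, -(a/cc), 1:]" for a
  have Q0: "Q a \<noteq> 0" for a unfolding Q_def by simp
  have q0: "[:-(1/cc^2), 0, 1:] = [:-(1/cc), 1:] * [:-(-(1/cc)), 1:]"
    using cc0 by (simp add: power2_eq_square)
  have qd: "Q (of_nat d) = [:-1, 1:] * [:-(1/cc), 1:]"
    unfolding Q_def using cc0 cc1[symmetric] by (simp add: field_simps)
  have pqd: "proots (Q (of_nat d)) = {#1, 1/cc#}" unfolding qd proots_two by simp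
  have "proots (char_poly (arc_matrix V E (nb_trans V E)))
     = replicate_mset (mE - nV) (1/cc) + replicate_mset (mE - nV) (-(1/cc)) + sum_list (map (\<lambda>a. proots (Q a)) es)"
  proof -
    have nz1: "[:-(1/cc^2), 0, 1:]^(mE - nV) \<noteq> 0" by simp
    have nz2: "prod_list (map Q es) \<noteq> 0" by (auto simp: prod_list_zero_iff Q0)
    have "proots ([:-(1/cc^2), 0, 1:]^(mE - nV) * prod_list (map Q es))
       = proots ([:-(1/cc^2), 0, 1:]^(mE - nV)) + proots (prod_list (map Q es))"
      by (rule proots_mult[OF nz1 nz2])
    also have "proots (prod_list (map Q es)) = sum_list (map (\<lambda>a. proots (Q a)) es)"
      by (rule proots_prod_map) (simp add: Q0)
    also have "proots ([:-(1/cc^2), 0, 1:]^(mE - nV)) = replicate_mset (mE - nV) (1/cc) + replicate_mset (mE - nV) (-(1/cc))"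
      unfolding proots_power q0 proots_two repeat2 by simp
    finally show ?thesis unfolding cpPnb[OF es les] cc_def[symmetric] Q_def[symmetric] by (simp add: o_def)
  qed
  also have "sum_list (map (\<lambda>a. proots (Q a)) es) = sum_mset (image_mset (\<lambda>a. proots (Q a)) (mset es))"
    by (metis mset_map sum_mset_sum_list)
  also have "\<dots> = add_mset 1 (add_mset (1/cc) (sum_mset (image_mset (\<lambda>a. proots (Q a)) (mset rl))))"
    unfolding rl by (simp add: pqd)
  finally have pr: "proots (char_poly (arc_matrix V E (nb_trans V E))) - {#1#}
     = replicate_mset (mE - nV) (1/cc) + replicate_mset (mE - nV) (-(1/cc)) + add_mset (1/cc) (sum_mset (image_mset (\<lambda>a. proots (Q a)) (mset rl)))"
    by simp
  have each: "a \<in> set rl \<Longrightarrow> sum_mset (image_mset (\<lambda>\<rho>. 1 / (1 - \<rho>)) (proots (Q a))) = (2*cc - a) / (cc + 1 - a)" for a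
    unfolding Q_def using cc0 cc1 rld by (intro quad_sum) auto
  have "sum_mset (image_mset (\<lambda>\<rho>. 1 / (1 - \<rho>)) (sum_mset (image_mset (\<lambda>a. proots (Q a)) (mset rl))))
     = sum_list (map (\<lambda>a. sum_mset (image_mset (\<lambda>\<rho>. 1 / (1 - \<rho>)) (proots (Q a)))) rl)"
    by (induction rl) auto
  also have "\<dots> = sum_list (map (\<lambda>a. (2*cc - a) / (cc + 1 - a)) rl)"
    using each by (intro arg_cong[where f = sum_list] map_cong) auto
  finally have S: "sum_mset (image_mset (\<lambda>\<rho>. 1 / (1 - \<rho>)) (sum_mset (image_mset (\<lambda>a. proots (Q a)) (mset rl))))
     = sum_list (map (\<lambda>a. (2*cc - a) / (cc + 1 - a)) rl)" .
  show ?thesis unfolding K_nb_def kemeny_def pr using S by (simp add: algebra_simps)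
qed

end

context rg begin

lemma complete_case:
  assumes n: "nV = d + 1"
  shows "graph_iso V E (complete_V nV) (complete_E nV)"
proof -
  have adj: "E u w" if u: "u \<in> V" and w: "w \<in> V" and uw: "u \<noteq> w" for u w
  proof -
    have sub: "{x\<in>V. E u x} \<subseteq> V - {u}" using Eirr by auto
    have "card (V - {u}) = d" using u finV n unfolding nV_def by simp
    hence "{x\<in>V. E u x} = V - {u}" using sub degd[OF u] finV by (intro card_subset_eq) auto
    thus ?thesis using w uw by auto
  qed
  obtain h where h: "bij_betw h V {0..<card V}" using ex_bij_betw_finite_nat[OF finV] by blast
  have "\<forall>u\<in>V. \<forall>v\<in>V. E u v \<longleftrightarrow> complete_E nV (h u) (h v)"
  proof (intro ballI)
    fix u v assume u: "u \<in> V" and v: "v \<in> V"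
    have hu: "h u < nV" "h v < nV" using h u v unfolding nV_def bij_betw_def by auto
    have "h u = h v \<longleftrightarrow> u = v" using h u v unfolding bij_betw_def inj_on_def by blast
    thus "E u v \<longleftrightarrow> complete_E nV (h u) (h v)" unfolding complete_E_def using hu adj u v Eirr by auto
  qed
  thus ?thesis unfolding graph_iso_def complete_V_def using h nV_def by auto
qed

lemma K33_case:
  assumes d: "d = 3" and n: "nV = 6" and tf: "\<not> (\<exists>u v w. E u v \<and> E v w \<and> E w u)"
  shows "graph_iso V E K33_V K33_E"
proof -
  obtain v0 where v0: "v0 \<in> V" using Vne by auto
  define N where "N = {w\<in>V. E v0 w}"
  define R where "R = V - insert v0 N"
  define P1 where "P1 = insert v0 R"
  have cN: "card N = 3" unfolding N_def using degd[OF v0] d by simp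
  have NV: "N \<subseteq> V" unfolding N_def by auto
  have v0N: "v0 \<notin> N" unfolding N_def using Eirr by auto
  have fN: "finite N" using NV finV finite_subset by blast
  have cR: "card R = 2"
  proof -
    have "card (insert v0 N) = 4" using cN v0N fN by simp
    moreover have "insert v0 N \<subseteq> V" using v0 NV by auto
    ultimately show ?thesis unfolding R_def using n finV unfolding nV_def by (simp add: card_Diff_subset fN)
  qed
  have fR: "finite R" unfolding R_def using finV by auto
  have v0R: "v0 \<notin> R" unfolding R_def by auto
  have cP1: "card P1 = 3" unfolding P1_def using cR fR v0R by simp
  have NR: "N \<inter> P1 = {}" unfolding P1_def R_def using v0N by auto
  have VP: "V = P1 \<union> N" unfolding P1_def R_def using v0 NV by auto
  have aR: "E a x" if a: "a \<in> N" and x: "x \<in> R" for a x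
  proof -
    have aV: "a \<in> V" using a NV by auto
    have sub: "{w\<in>V. E a w} \<subseteq> P1"
    proof
      fix w assume w: "w \<in> {w\<in>V. E a w}"
      have "w \<notin> N"
      proof
        assume "w \<in> N"
        hence "E w v0" using Esym unfolding N_def by auto
        moreover have "E v0 a" using a unfolding N_def by auto
        ultimately show False using tf w by blast
      qed
      thus "w \<in> P1" using w unfolding P1_def R_def by auto
    qed
    have "card {w\<in>V. E a w} = card P1" using degd[OF aV] d cP1 by simp
    hence "{w\<in>V. E a w} = P1" using sub fR by (intro card_subset_eq) (auto simp: P1_def)
    thus ?thesis using x unfolding P1_def by auto
  qed
  have xR: "{w\<in>V. E x w} = N" if x: "x \<in> R" for x
  proof -
    have xV: "x \<in> V" using x unfolding R_def by auto
    have sub: "N \<subseteq> {w\<in>V. E x w}" using aR[OF _ x] Esym NV by auto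
    have "card N = card {w\<in>V. E x w}" using degd[OF xV] d cN by simp
    thus ?thesis using sub finV by (intro card_subset_eq[symmetric]) auto
  qed
  have char: "E u w \<longleftrightarrow> (u \<in> P1) \<noteq> (w \<in> P1)" if u: "u \<in> V" and w: "w \<in> V" for u w
  proof (cases "u \<in> P1")
    case True
    show ?thesis
    proof (cases "u = v0")
      case True
      have "w \<in> N \<longleftrightarrow> w \<notin> P1" using w VP NR by auto
      thus ?thesis using True \<open>u \<in> P1\<close> w unfolding N_def by auto
    next
      case False
      hence uR: "u \<in> R" using True unfolding P1_def by auto
      have "E u w \<longleftrightarrow> w \<in> N" using xR[OF uR] w by auto
      moreover have "w \<in> N \<longleftrightarrow> w \<notin> P1" using w VP NR by auto
      ultimately show ?thesis using True by auto
    qed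
  next
    case False
    hence uN: "u \<in> N" using u VP by auto
    show ?thesis
    proof (cases "w \<in> P1")
      case True
      show ?thesis
      proof (cases "w = v0")
        case True thus ?thesis using uN Esym \<open>u \<notin> P1\<close> unfolding N_def P1_def by auto
      next
        case False
        hence "w \<in> R" using True unfolding P1_def by auto
        thus ?thesis using aR[OF uN] \<open>u \<notin> P1\<close> True by auto
      qed
    next
      case False
      hence wN: "w \<in> N" using w VP by auto
      have "\<not> E u w"
      proof
        assume "E u w"
        moreover have "E w v0" "E v0 u" using wN uN Esym unfolding N_def by auto
        ultimately show False using tf by blast
      qed
      thus ?thesis using False \<open>u \<notin> P1\<close> by auto
    qed
  qed
  obtain h1 :: "'a \<Rightarrow> nat" where h1: "bij_betw h1 P1 {0..<3}" using ex_bij_betw_finite_nat[of P1] fR cP1 unfolding P1_def by auto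
  obtain h2 :: "'a \<Rightarrow> nat" where h2: "bij_betw h2 N {0..<3}" using ex_bij_betw_finite_nat[OF fN] cN by auto
  define f where "f x = (if x \<in> P1 then h1 x else 3 + h2 x)" for x
  have b1: "bij_betw f P1 {0..<3}" using h1 by (rule bij_betw_cong[THEN iffD1, rotated]) (auto simp: f_def)
  have b2: "bij_betw f N {3..<6}"
  proof -
    have "bij_betw ((+) 3 \<circ> h2) N ((+) 3 ` {0..<3})"
      by (rule bij_betw_trans[OF h2]) (simp add: bij_betw_def inj_on_def)
    moreover have "(+) 3 ` {0..<3::nat} = {3..<6}" by (auto simp: image_iff)
    ultimately have "bij_betw ((+) 3 \<circ> h2) N {3..<6}" by simp
    thus ?thesis by (rule bij_betw_cong[THEN iffD1, rotated]) (use NR in \<open>auto simp: f_def\<close>)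
  qed
  have bij: "bij_betw f V {0..<6}"
  proof -
    have "bij_betw f (P1 \<union> N) ({0..<3} \<union> {3..<6})" by (rule bij_betw_combine[OF b1 b2]) auto
    moreover have "{0..<3} \<union> {3..<6::nat} = {0..<6}" by auto
    ultimately show ?thesis using VP by simp
  qed
  have lt: "f x < 3 \<longleftrightarrow> x \<in> P1" if x: "x \<in> V" for x
  proof -
    have l1: "x \<in> P1 \<Longrightarrow> f x \<in> {0..<3}" using b1 unfolding bij_betw_def by blast
    have l2: "x \<in> N \<Longrightarrow> f x \<in> {3..<6}" using b2 unfolding bij_betw_def by blast
    show ?thesis using l1 l2 x VP by auto
  qed
  have "\<forall>u\<in>V. \<forall>v\<in>V. E u v \<longleftrightarrow> K33_E (f u) (f v)"
  proof (intro ballI)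
    fix u v assume u: "u \<in> V" and v: "v \<in> V"
    have "f u < 6" "f v < 6" using bij u v unfolding bij_betw_def by auto
    thus "E u v \<longleftrightarrow> K33_E (f u) (f v)" unfolding K33_E_def using char[OF u v] lt[OF u] lt[OF v] by auto
  qed
  thus ?thesis unfolding graph_iso_def K33_V_def using bij by auto
qed

lemma tri_trace:
  assumes tri: "E u v" "E v w" "E w u"
  shows "Re (mtr (Am * Am * Am)) \<ge> 1"
proof -
  define a where "a i j = (if E (vs!i) (vs!j) then 1 else 0 :: nat)" for i j
  have Aa: "i < nV \<Longrightarrow> j < nV \<Longrightarrow> Am $$ (i,j) = of_nat (a i j)" for i j by (simp add: Am_def a_def)
  define t where "t = (\<Sum>i<nV. \<Sum>j<nV. (\<Sum>k<nV. a i k * a k j) * a j i)"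
  have "mtr (Am * Am * Am) = of_nat t"
    unfolding mtr_def t_def of_nat_sum
  proof (rule sum.cong)
    fix i assume "i \<in> {..<nV}"
    hence i: "i < nV" by simp
    have "(Am * Am * Am) $$ (i,i) = (\<Sum>j\<in>{0..<nV}. (\<Sum>k\<in>{0..<nV}. Am $$ (i,k) * Am $$ (k,j)) * Am $$ (j,i))"
      using i by (simp add: scalar_prod_def)
    also have "\<dots> = (\<Sum>j<nV. of_nat ((\<Sum>k<nV. a i k * a k j) * a j i))"
      unfolding lessThan_atLeast0 by (rule sum.cong) (auto simp: Aa i of_nat_sum intro!: sum.cong)
    finally show "(Am * Am * Am) $$ (i,i) = (\<Sum>j<nV. of_nat ((\<Sum>k<nV. a i k * a k j) * a j i))" .
  qed simp
  moreover have "t \<ge> 1"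
  proof (rule ccontr)
    assume "\<not> t \<ge> 1"
    hence t0: "t = 0" by simp
    have uV: "u \<in> V" and vV: "v \<in> V" and wV: "w \<in> V" using tri EV by auto
    obtain iu where iu: "iu < nV" "vs!iu = u" using uV vs by (metis in_set_conv_nth)
    obtain iv where iv: "iv < nV" "vs!iv = v" using vV vs by (metis in_set_conv_nth)
    obtain iw where iw: "iw < nV" "vs!iw = w" using wV vs by (metis in_set_conv_nth)
    have "(\<Sum>k<nV. a iu k * a k iw) * a iw iu = 0" using t0 iu iw unfolding t_def by simp
    moreover have "a iw iu = 1" using iu iw tri unfolding a_def by simp
    ultimately have "(\<Sum>k<nV. a iu k * a k iw) = 0" by simp
    hence "a iu iv * a iv iw = 0" using iv by simp
    thus False using iu iv iw tri unfolding a_def by simp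
  qed
  ultimately show ?thesis by simp
qed

end

lemma sum_list_of_real: "sum_list (map (\<lambda>x. complex_of_real (g x)) xs) = complex_of_real (sum_list (map g xs))"
  by (induction xs) auto

lemma sum_list_nth: "sum_list (map f xs) = (\<Sum>i<length xs. f (xs ! i))"
  by (induction xs rule: rev_induct) (auto simp: nth_append)

lemma sum_list_split: "mset es = add_mset x (mset rl) \<Longrightarrow> sum_list (map g es) = g x + sum_list (map g rl)"
  for g :: "'a \<Rightarrow> 'b::comm_monoid_add"
  by (simp add: sum_mset_sum_list[symmetric])

lemma const_alg:
  fixes n D S :: real
  assumes dpos: "D > 2"
  shows "n * D - n - ((n * D / 2 - n) * ((D - 1) / (D - 2) + (D - 1) / D) + (D - 1) / (D - 2)) + (2 * S - (n - 1))
     = 2 * S - n / D - 1 / (D - 2)"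
proof -
  have a: "D \<noteq> 0" "D - 2 \<noteq> 0" using dpos by auto
  have s1: "(D - 1) / (D - 2) + (D - 1) / D = 2 * (D - 1)^2 / (D * (D - 2))"
    using a by (simp add: field_simps power2_eq_square)
  have s2: "(n * D / 2 - n) = n * (D - 2) / 2" by (simp add: field_simps)
  have h1: "(n * D / 2 - n) * ((D - 1) / (D - 2) + (D - 1) / D) = n * (D - 1)^2 / D"
    unfolding s1 s2 using a by (simp add: field_simps)
  have h2: "n * D - n - n * (D - 1)^2 / D - n = - n / D"
    using a by (simp add: field_simps power2_eq_square)
  have h3: "1 - (D - 1) / (D - 2) = - 1 / (D - 2)"
    using a by (simp add: field_simps)
  show ?thesis unfolding h1 using h2 h3 by (simp add: algebra_simps)
qed
context rg begin

theorem main: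
  assumes n4: "\<not> graph_iso V E (complete_V 4) (complete_E 4)"
    and n5: "\<not> graph_iso V E (complete_V 5) (complete_E 5)"
    and n33: "\<not> graph_iso V E K33_V K33_E"
  shows "Im (K_e V E) = 0 \<and> Im (K_nb V E) = 0 \<and> Re (K_e V E) > Re (K_nb V E)"
proof -
  obtain es where es: "char_poly Am = (\<Prod>a\<leftarrow>es. [:-a, 1:])" and les: "length es = nV"
    using char_poly_factorized[OF carriers(1)] by blast
  have cd: "count (mset es) (of_nat d) = 1" by (rule count_d[OF es])
  hence dmem: "of_nat d \<in> set es" by (metis count_mset_0_iff zero_neq_one)
  define rl where "rl = remove1 (of_nat d) es"
  have rlm: "mset es = add_mset (of_nat d) (mset rl)" unfolding rl_def using dmem by simp
  have rld: "of_nat d \<notin> set rl"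
  proof
    assume "of_nat d \<in> set rl"
    hence "count (mset rl) (of_nat d) \<ge> 1" by (simp add: Suc_le_eq)
    thus False using cd rlm by simp
  qed
  have lrl: "length rl = nV - 1" unfolding rl_def using les dmem by (simp add: length_remove1)
  have root: "poly (char_poly Am) a = 0" if "a \<in> set es" for a
    unfolding es poly_prod_list using that by (auto simp: prod_list_zero_iff)
  have rlsub: "set rl \<subseteq> set es" using rlm by (metis mset_subset_eqD set_mset_mset subset_mset.le_add_same_cancel2 mset_subset_eq_add_mset_cancel add_mset_add_single subsetI union_iff set_mset_add_mset_insert insertCI)
  have real_rl: "Im a = 0" and lt_rl: "Re a < real d" if a: "a \<in> set rl" for a
  proof -
    have ae: "a \<in> set es" using a rlsub by auto
    show "Im a = 0" using roots_A(1)[OF root[OF ae]] .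
    have "Re a \<le> real d" using roots_A(3)[OF root[OF ae]] .
    moreover have "a \<noteq> of_nat d" using a rld by auto
    hence "Re a \<noteq> real d" using \<open>Im a = 0\<close> by (auto simp: complex_eq_iff)
    ultimately show "Re a < real d" by simp
  qed
  define xs where "xs = map Re rl"
  have rlxs: "rl = map complex_of_real xs" unfolding xs_def using real_rl
    by (induction rl) (auto simp: complex_eq_iff)
  have lxs: "length xs = nV - 1" unfolding xs_def using lrl by simp
  have sums: "sum_list (map (\<lambda>a. a^k) rl) = complex_of_real (sum_list (map (\<lambda>x. x^k) xs))" for k
    unfolding rlxs using sum_list_of_real[of "\<lambda>x. x^k" xs] by (simp add: o_def)
  have tr: "sum_list es = 0" "sum_list (map (\<lambda>a. a^2) es) = of_nat (nV * d)"
    "sum_list (map (\<lambda>a. a^3) es) = mtr (Am * Am * Am)" using traces[OF es] by auto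
  have s1: "sum_list xs = - real d"
  proof -
    have "sum_list (map (\<lambda>a. a) es) = of_nat d + sum_list (map (\<lambda>a. a) rl)" by (rule sum_list_split[OF rlm])
    hence "of_nat d + complex_of_real (sum_list xs) = 0" using tr(1) sums[of 1] by simp
    hence "complex_of_real (sum_list xs + real d) = 0" by (simp add: add.commute)
    hence "sum_list xs + real d = 0" by (simp only: of_real_eq_0_iff)
    thus ?thesis by linarith
  qed
  have s2: "sum_list (map (\<lambda>x. x^2) xs) = real (nV * d) - (real d)^2"
  proof -
    have "sum_list (map (\<lambda>a. a^2) es) = (of_nat d)^2 + sum_list (map (\<lambda>a. a^2) rl)" by (rule sum_list_split[OF rlm])
    hence "complex_of_real (sum_list (map (\<lambda>x. x^2) xs)) = complex_of_real (real (nV * d) - (real d)^2)"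
      using tr(2) sums[of 2] by simp
    thus ?thesis by (simp only: of_real_eq_iff)
  qed
  have s3: "sum_list (map (\<lambda>x. x^3) xs) = Re (mtr (Am * Am * Am)) - (real d)^3"
  proof -
    have "sum_list (map (\<lambda>a. a^3) es) = (of_nat d)^3 + sum_list (map (\<lambda>a. a^3) rl)" by (rule sum_list_split[OF rlm])
    hence "complex_of_real (sum_list (map (\<lambda>x. x^3) xs)) = mtr (Am * Am * Am) - (of_nat d)^3"
      using tr(3) sums[of 3] by simp
    hence "Re (complex_of_real (sum_list (map (\<lambda>x. x^3) xs))) = Re (mtr (Am * Am * Am) - (of_nat d)^3)" by simp
    thus ?thesis by simp
  qed
  define c where "c = real d - 1"
  have ccr: "cc = complex_of_real c" unfolding cc_def c_def by simp
  define KE where "KE = real (nA - nV) + sum_list (map (\<lambda>x. 1 / (1 - x / real d)) xs)"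
  define KN where "KN = real (mE - nV) * (1 / (1 - 1/c) + 1 / (1 + 1/c)) + 1 / (1 - 1/c)
     + sum_list (map (\<lambda>x. (2*c - x) / (c + 1 - x)) xs)"
  have KEe: "K_e V E = complex_of_real KE"
    unfolding Ke_formula[OF es les rlm] KE_def rlxs using sum_list_of_real[of "\<lambda>x. 1 / (1 - x / real d)" xs]
    by (simp add: o_def)
  have KNe: "K_nb V E = complex_of_real KN"
    unfolding Knb_formula[OF es les rlm rld] KN_def rlxs ccr using sum_list_of_real[of "\<lambda>x. (2*c - x) / (c + 1 - x)" xs]
    by (simp add: o_def)
  define S where "S = (\<Sum>i<length xs. 1 / (real d - xs ! i))"
  have xlt: "\<And>i. i < length xs \<Longrightarrow> xs ! i < real d"
    unfolding xs_def using lt_rl by simp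
  have diff: "KE - KN = 2 * S - real nV / real d - 1 / (real d - 2)"
  proof -
    have dpos: "real d > 2" using d3 by simp
    have tmq: "1 / (1 - x / real d) - (2*c - x) / (c + 1 - x) = 2 / (real d - x) - 1" if x: "x < real d" for x
    proof -
      have u: "real d - x \<noteq> 0" using x by simp
      have D: "real d \<noteq> 0" using dpos by simp
      have e1: "1 / (1 - x / real d) = real d / (real d - x)" using u D by (simp add: field_simps)
      have e2: "c + 1 - x = real d - x" unfolding c_def by simp
      have "real d / (real d - x) - (2*c - x) / (real d - x) = (real d - (2*c - x)) / (real d - x)"
        by (simp add: diff_divide_distrib)
      also have "real d - (2*c - x) = 2 - (real d - x)" unfolding c_def by simp
      also have "(2 - (real d - x)) / (real d - x) = 2 / (real d - x) - 1" using u by (simp add: diff_divide_distrib)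
      finally show ?thesis unfolding e1 e2 .
    qed
    have "sum_list (map (\<lambda>x. 1 / (1 - x / real d)) xs) - sum_list (map (\<lambda>x. (2*c - x) / (c + 1 - x)) xs)
        = (\<Sum>i<length xs. 2 / (real d - xs ! i) - 1)"
      unfolding sum_list_nth sum_subtractf[symmetric] using tmq xlt by (intro sum.cong) auto
    also have "\<dots> = 2 * S - real (nV - 1)" unfolding S_def using lxs by (simp add: sum_subtractf sum_distrib_left)
    finally have T: "sum_list (map (\<lambda>x. 1 / (1 - x / real d)) xs) - sum_list (map (\<lambda>x. (2*c - x) / (c + 1 - x)) xs)
        = 2 * S - real (nV - 1)" .
    have r1: "real (nA - nV) = real nV * real d - real nV" using nA_eq nV_le_nA by (simp add: of_nat_diff)
    have m2: "real mE * 2 = real nV * real d"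
    proof -
      have "mE * 2 = nV * d" using nA_even nA_eq by simp
      hence "real (mE * 2) = real (nV * d)" by (simp only:)
      thus ?thesis by simp
    qed
    have r2: "real (mE - nV) = real nV * real d / 2 - real nV" using mE_ge m2
      by (simp add: of_nat_diff field_simps)
    have c1: "1 / (1 - 1/c) = (real d - 1) / (real d - 2)" unfolding c_def using dpos by (simp add: field_simps)
    have c2: "1 / (1 + 1/c) = (real d - 1) / real d" unfolding c_def using dpos by (simp add: field_simps)
    have r3: "real (nV - 1) = real nV - 1" using nV_pos by (simp add: of_nat_diff)
    have "KE - KN = real (nA - nV) - (real (mE - nV) * (1 / (1 - 1/c) + 1 / (1 + 1/c)) + 1 / (1 - 1/c)) + (2 * S - real (nV - 1))"
      unfolding KE_def KN_def using T by simp
    also have "\<dots> = 2 * S - real nV / real d - 1 / (real d - 2)"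
      unfolding r1 r2 r3 c1 c2 by (rule const_alg) (use dpos in simp)
    finally show ?thesis .
  qed
  have ineq: "2 * S > real nV / real d + 1 / (real d - 2)"
    unfolding S_def
  proof (rule final_ineq[where m = "length xs" and n = nV and d = d])
    show "nV = length xs + 1" using lxs nV_pos by simp
    show "nV \<ge> d + 1" by (rule nV_ge)
    show "d \<ge> 3" by (rule d3)
    show "\<And>i. i < length xs \<Longrightarrow> xs ! i < real d" by (rule xlt)
    show "(\<Sum>i<length xs. xs ! i) = - real d" using s1 sum_list_nth[of "\<lambda>x. x" xs] by simp
    show "even (nV * d)" using nA_eq nA_even by (metis dvd_triv_left)
    show "\<not> (d = 3 \<and> nV = 4)"
    proof
      assume a: "d = 3 \<and> nV = 4"
      hence "graph_iso V E (complete_V nV) (complete_E nV)" using complete_case by simp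
      thus False using n4 a by simp
    qed
    show "\<not> (d = 4 \<and> nV = 5)"
    proof
      assume a: "d = 4 \<and> nV = 5"
      hence "graph_iso V E (complete_V nV) (complete_E nV)" using complete_case by simp
      thus False using n5 a by simp
    qed
    assume a: "d = 3 \<and> nV = 6"
    have "\<exists>u v w. E u v \<and> E v w \<and> E w u" using K33_case a n33 by blast
    then obtain u v w where "E u v" "E v w" "E w u" by blast
    hence t1: "Re (mtr (Am * Am * Am)) \<ge> 1" by (rule tri_trace)
    show "(\<Sum>i<length xs. (xs ! i)^2) = 9 \<and> (\<Sum>i<length xs. (xs ! i)^3) \<ge> -26"
      using s2 s3 t1 a sum_list_nth[of "\<lambda>x. x^2" xs] sum_list_nth[of "\<lambda>x. x^3" xs] by simp
  qed
  show ?thesis using KEe KNe diff ineq by simp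
qed

end

theorem theorem3p3:
  fixes V :: "'a::linorder set" and E :: "'a \<Rightarrow> 'a \<Rightarrow> bool" and d :: nat
  assumes "simple_graph V E" and "connected_graph V E" and "regular V E d" and "d \<ge> 3"
    and "\<not> graph_iso V E (complete_V 4) (complete_E 4)"
    and "\<not> graph_iso V E (complete_V 5) (complete_E 5)"
    and "\<not> graph_iso V E K33_V K33_E"
  shows "Im (K_e V E) = 0 \<and> Im (K_nb V E) = 0 \<and> Re (K_e V E) > Re (K_nb V E)"
proof -
  interpret rg V E d using assms(1-4) by unfold_locales
  show ?thesis using main assms(5-7) by blast
qed

end
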